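(* For every $n\ge1$, $\mathfrak{S}^{\mathrm{BPD}}=w_0\odot\prod_{1\le i<j\le n}(x_i-\theta_j)$, where the product may be taken in any order.
   Context: Permutations in one-line notation, $w_0=[n,\dots,1]$, $wt_{i,j}$ is $w$ with positions $i<j$ swapped, $\ell$ the number of inversions, $u\lessdot w$ iff $w=ut_{i,j}$ with $\ell(w)=\ell(u)+1$. Fomin–Kirillov algebra $\mathcal{E}_n$: generators $d_{i,j}$ ($1\le i<j\le n$), relations $d_{i,j}^2=0$; $d_{i,j}d_{j,k}=d_{i,k}d_{i,j}+d_{j,k}d_{i,k}$ and $d_{j,k}d_{i,j}=d_{i,j}d_{i,k}+d_{i,k}d_{j,k}$ ($i<j<k$); $d_{i,j}d_{k,l}=d_{k,l}d_{i,j}$ ($i,j,k,l$ distinct). Right action on $\mathbb{Q}[S_n]$: $w\odot d_{i,j}=wt_{i,j}$ if $wt_{i,j}\lessdot w$, else $0$; extended to $\mathbb{Q}[x_1,\dots,x_{n-1}]\otimes\mathcal{E}_n$ acting on $\mathbb{Q}[x_1,\dots,x_{n-1}][S_n]$ by $(fw)\odot(g\otimes e)=fg(w\odot e)$. $B_{i,j}=d_{1,j}+\dots+d_{i,j}$; $R_i(x_i)=(x_i+B_{i,i+1})\cdots(x_i+B_{i,n})$; $\mathfrak{S}^{\mathrm{BPD}}=w_0\odot(R_1(x_1)\cdots R_{n-1}(x_{n-1}))$. The Dunkl elements are $\theta_i=-\sum_{j<i}d_{j,i}+\sum_{j>i}d_{i,j}\in\mathcal{E}_n$ for $i\in[n]$;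 they pairwise commute (Fomin–Kirillov), so the factors $x_i-\theta_j$ pairwise commute. *)

theory Defs
  imports "HOL-Combinatorics.Combinatorics" "HOL-Library.Poly_Mapping"
begin

text \<open>A permutation w of [n] is a function nat => nat with w permutes {1..n};
  its one-line notation is [w 1, ..., w n].  w t_{i,j} (positions i,j swapped)
  is w o transpose i j.\<close>

definition inv_count :: "nat \<Rightarrow> (nat \<Rightarrow> nat) \<Rightarrow> nat" where
  "inv_count n w = card {(i, j). 1 \<le> i \<and> i < j \<and> j \<le> n \<and> w i > w j}"

definition covers :: "nat \<Rightarrow> (nat \<Rightarrow> nat) \<Rightarrow> (nat \<Rightarrow> nat) \<Rightarrow> bool" where
  "covers n u w \<longleftrightarrow> (\<exists>i j. 1 \<le> i \<and> i < j \<and> j \<le> n \<and> w = u \<circ> transpose i j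
      \<and> inv_count n w = inv_count n u + 1)"

definition w0 :: "nat \<Rightarrow> nat \<Rightarrow> nat" where
  "w0 n k = (if 1 \<le> k \<and> k \<le> n then n + 1 - k else k)"

text \<open>An element of R[S_n] (R a commutative ring, later the polynomial ring
  Q[x_1,...,x_{n-1}]) is a coefficient function on permutations.
  Elements of R (x) E_n act on the right; we represent their action as maps
  on R[S_n].\<close>

type_synonym 'a grp_elt = "(nat \<Rightarrow> nat) \<Rightarrow> 'a"
type_synonym 'a op = "'a grp_elt \<Rightarrow> 'a grp_elt"

definition basis_elt :: "(nat \<Rightarrow> nat) \<Rightarrow> 'a::comm_ring_1 grp_elt" where
  "basis_elt w = (\<lambda>v. if v = w then 1 else 0)"

text \<open>Action of d_{i,j}: w \<odot> d_{i,j} = w t_{i,j} if w t_{i,j} \<lessdot> w, else 0,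
  extended linearly.  The coefficient of v in F \<odot> d_{i,j} is the coefficient
  of w = v t_{i,j} in F, provided v \<lessdot> w.\<close>
definition d_act :: "nat \<Rightarrow> nat \<Rightarrow> nat \<Rightarrow> 'a::comm_ring_1 op" where
  "d_act n i j F = (\<lambda>v. if v permutes {1..n} \<and> covers n v (v \<circ> transpose i j)
                         then F (v \<circ> transpose i j) else 0)"

definition op_add :: "'a::comm_ring_1 op \<Rightarrow> 'a op \<Rightarrow> 'a op" where
  "op_add A B F = (\<lambda>v. A F v + B F v)"

definition op_zero :: "'a::comm_ring_1 op" where
  "op_zero F = (\<lambda>v. 0)"

definition op_neg :: "'a::comm_ring_1 op \<Rightarrow> 'a op" where
  "op_neg A F = (\<lambda>v. - A F v)"

definition op_scal :: "'a::comm_ring_1 \<Rightarrow> 'a op" where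
  "op_scal c F = (\<lambda>v. c * F v)"

definition op_sum :: "'a::comm_ring_1 op list \<Rightarrow> 'a op" where
  "op_sum As = foldr op_add As op_zero"

definition act_prod :: "'a::comm_ring_1 grp_elt \<Rightarrow> 'a op list \<Rightarrow> 'a grp_elt" where
  "act_prod F As = foldl (\<lambda>G A. A G) F As"

definition B_op :: "nat \<Rightarrow> nat \<Rightarrow> nat \<Rightarrow> 'a::comm_ring_1 op" where
  "B_op n i j = op_sum (map (\<lambda>k. d_act n k j) [1..<i+1])"

definition R_factors :: "nat \<Rightarrow> (nat \<Rightarrow> 'a::comm_ring_1) \<Rightarrow> nat \<Rightarrow> 'a op list" where
  "R_factors n x i = map (\<lambda>j. op_add (op_scal (x i)) (B_op n i j)) [i+1..<n+1]"

definition S_BPD :: "nat \<Rightarrow> (nat \<Rightarrow> 'a::comm_ring_1) \<Rightarrow> 'a grp_elt" where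
  "S_BPD n x = act_prod (basis_elt (w0 n)) (concat (map (R_factors n x) [1..<n]))"

definition theta_op :: "nat \<Rightarrow> nat \<Rightarrow> 'a::comm_ring_1 op" where
  "theta_op n i = op_add (op_neg (op_sum (map (\<lambda>j. d_act n j i) [1..<i])))
                         (op_sum (map (\<lambda>j. d_act n i j) [i+1..<n+1]))"

definition dunkl_factor :: "nat \<Rightarrow> (nat \<Rightarrow> 'a::comm_ring_1) \<Rightarrow> nat \<times> nat \<Rightarrow> 'a op" where
  "dunkl_factor n x p = op_add (op_scal (x (fst p))) (op_neg (theta_op n (snd p)))"

type_synonym qpoly = "(nat \<Rightarrow>\<^sub>0 nat) \<Rightarrow>\<^sub>0 rat"

definition Xvar :: "nat \<Rightarrow> qpoly" where
  "Xvar i = Poly_Mapping.single (Poly_Mapping.single i 1) 1"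

end

theory Submission
  imports Defs
begin


lemma inv_count_sum:
  "int (inv_count n w) = (\<Sum>p\<in>{1..n}. \<Sum>q\<in>{1..n}. (of_bool (p < q \<and> w q < w p) :: int))"
proof -
  have "(\<Sum>p\<in>{1..n}. \<Sum>q\<in>{1..n}. (of_bool (p < q \<and> w q < w p) :: int))
      = (\<Sum>(p,q)\<in>{1..n}\<times>{1..n}. (of_bool (p < q \<and> w q < w p) :: int))"
    by (rule sum.cartesian_product)
  also have "\<dots> = (\<Sum>x\<in>{1..n}\<times>{1..n}. (of_bool (fst x < snd x \<and> w (snd x) < w (fst x)) :: int))"
    by (simp add: case_prod_beta')
  also have "\<dots> = int (card (({1..n}\<times>{1..n}) \<inter> {x. fst x < snd x \<and> w (snd x) < w (fst x)}))"
    by (intro sum_of_bool_eq finite_cartesian_product) auto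
  also have "({1..n}\<times>{1..n}) \<inter> {x. fst x < snd x \<and> w (snd x) < w (fst x)}
        = {(i, j). 1 \<le> i \<and> i < j \<and> j \<le> n \<and> w i > w j}"
    by auto
  finally show ?thesis unfolding inv_count_def by simp
qed

lemma sum_split_ab:
  fixes H :: "nat \<Rightarrow> 'b::comm_monoid_add"
  assumes "finite A" "a \<in> A" "b \<in> A" "a \<noteq> b"
  shows "sum H A = H a + H b + sum H (A - {a,b})"
proof -
  have "sum H A = H a + sum H (A - {a})" using assms by (simp add: sum.remove)
  also have "sum H (A - {a}) = H b + sum H (A - {a} - {b})" using assms by (simp add: sum.remove)
  also have "A - {a} - {b} = A - {a,b}" by auto
  finally show ?thesis by (simp add: add.assoc)
qed

lemma sum_transpose_reindex:
  fixes f :: "nat \<Rightarrow> 'b::comm_monoid_add"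
  assumes "a \<in> A" "b \<in> A"
  shows "(\<Sum>p\<in>A. f (transpose a b p)) = sum f A"
proof -
  have "bij_betw (transpose a b) A A"
    using assms by (intro permutes_imp_bij permutes_swap_id)
  then show ?thesis by (rule sum.reindex_bij_betw)
qed

lemma inv_swap_formula:
  assumes v: "v permutes {1..n}" and ab: "1 \<le> a" "a < b" "b \<le> n" and lt: "v a < v b"
  shows "int (inv_count n (v \<circ> transpose a b)) = int (inv_count n v) + 1 + 2 *
     (\<Sum>k\<in>{1..n}-{a,b}. (of_bool (a < k \<and> k < b \<and> v a < v k \<and> v k < v b) :: int))"
proof -
  define U where "U = {1..n::nat}"
  define t where "t = transpose a b"
  have aU: "a \<in> U" and bU: "b \<in> U" and ab': "a \<noteq> b" and fU: "finite U" using ab by (auto simp: U_def)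
  have injv: "inj v" using v by (rule permutes_inj)
  have tt: "t (t x) = x" for x by (simp add: t_def transpose_def)
  define G where "G p q = (of_bool (t p < t q \<and> v q < v p) - of_bool (p < q \<and> v q < v p) :: int)" for p q
  have e1: "int (inv_count n (v \<circ> t)) = (\<Sum>p\<in>U. \<Sum>q\<in>U. (of_bool (p < q \<and> v (t q) < v (t p)) :: int))"
    unfolding inv_count_sum U_def by simp
  also have "\<dots> = (\<Sum>p\<in>U. \<Sum>q\<in>U. (of_bool (t p < t q \<and> v (t (t q)) < v (t (t p))) :: int))"
  proof -
    have "(\<Sum>p\<in>U. \<Sum>q\<in>U. (of_bool (p < q \<and> v (t q) < v (t p)) :: int))
         = (\<Sum>p\<in>U. \<Sum>q\<in>U. (of_bool (p < t q \<and> v (t (t q)) < v (t p)) :: int))"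
      by (intro sum.cong refl sum_transpose_reindex[OF aU bU, unfolded t_def[symmetric], symmetric])
    also have "\<dots> = (\<Sum>p\<in>U. \<Sum>q\<in>U. (of_bool (t p < t q \<and> v (t (t q)) < v (t (t p))) :: int))"
      by (rule sum_transpose_reindex[OF aU bU, unfolded t_def[symmetric], symmetric])
    finally show ?thesis .
  qed
  also have "\<dots> = (\<Sum>p\<in>U. \<Sum>q\<in>U. (of_bool (t p < t q \<and> v q < v p) :: int))"
    by (simp add: tt)
  finally have e2: "int (inv_count n (v \<circ> t)) - int (inv_count n v) = (\<Sum>p\<in>U. \<Sum>q\<in>U. G p q)"
    unfolding G_def inv_count_sum U_def[symmetric] by (simp add: sum_subtractf)
  have G0: "G p q = 0" if "p \<notin> {a,b}" "q \<notin> {a,b}" for p q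
    using that by (simp add: G_def t_def)
  have inner: "(\<Sum>q\<in>U. G p q) = G p a + G p b" if "p \<notin> {a,b}" for p
  proof -
    have "(\<Sum>q\<in>U. G p q) = G p a + G p b + (\<Sum>q\<in>U-{a,b}. G p q)"
      by (rule sum_split_ab[OF fU aU bU ab'])
    also have "(\<Sum>q\<in>U-{a,b}. G p q) = 0" using G0 that by (intro sum.neutral) auto
    finally show ?thesis by simp
  qed
  have "(\<Sum>p\<in>U. \<Sum>q\<in>U. G p q) = (\<Sum>q\<in>U. G a q) + (\<Sum>q\<in>U. G b q) + (\<Sum>p\<in>U-{a,b}. G p a + G p b)"
    by (subst sum_split_ab[OF fU aU bU ab']) (simp add: inner)
  also have "(\<Sum>q\<in>U. G a q) = G a a + G a b + (\<Sum>q\<in>U-{a,b}. G a q)"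
    by (rule sum_split_ab[OF fU aU bU ab'])
  also have "(\<Sum>q\<in>U. G b q) = G b a + G b b + (\<Sum>q\<in>U-{a,b}. G b q)"
    by (rule sum_split_ab[OF fU aU bU ab'])
  finally have e3: "(\<Sum>p\<in>U. \<Sum>q\<in>U. G p q) = G a a + G a b + G b a + G b b +
        (\<Sum>k\<in>U-{a,b}. G a k + G b k + G k a + G k b)"
    by (simp add: sum.distrib algebra_simps)
  have Gaa: "G a a = 0" and Gbb: "G b b = 0" by (simp_all add: G_def)
  have Gab: "G a b = 0" using lt ab by (simp add: G_def t_def)
  have Gba: "G b a = 1" using lt ab by (simp add: G_def t_def)
  have pt: "G a k + G b k + G k a + G k b = 2 * (of_bool (a < k \<and> k < b \<and> v a < v k \<and> v k < v b) :: int)"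
    if k: "k \<in> U - {a,b}" for k
  proof -
    have kab: "k \<noteq> a" "k \<noteq> b" using k by auto
    have "v k \<noteq> v a" "v k \<noteq> v b" using injv kab by (auto dest: injD)
    then show ?thesis using kab lt ab unfolding G_def t_def
      by (cases "k < a"; cases "k < b"; cases "v k < v a"; cases "v k < v b"; simp add: transpose_def)
  qed
  show ?thesis
    using e2 e3 Gaa Gbb Gab Gba pt unfolding t_def U_def
    by (simp add: sum_distrib_left)
qed



definition Up :: "(nat \<Rightarrow> nat) \<Rightarrow> nat \<Rightarrow> nat \<Rightarrow> bool" where
  "Up v a b \<longleftrightarrow> v a < v b \<and> (\<forall>k. a < k \<longrightarrow> k < b \<longrightarrow> \<not> (v a < v k \<and> v k < v b))"

lemma covers_swap_iff_inv:
  assumes "1 \<le> a" "a < b" "b \<le> n"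
  shows "covers n v (v \<circ> transpose a b) \<longleftrightarrow> inv_count n (v \<circ> transpose a b) = inv_count n v + 1"
  using assms unfolding covers_def by blast

lemma covers_iff:
  assumes v: "v permutes {1..n}" and ab: "1 \<le> a" "a < b" "b \<le> n"
  shows "covers n v (v \<circ> transpose a b) \<longleftrightarrow> Up v a b"
proof -
  have injv: "inj v" using v by (rule permutes_inj)
  have neq: "v a \<noteq> v b" using injv ab by (auto dest: injD)
  show ?thesis
  proof (cases "v a < v b")
    case True
    define S where "S = (\<Sum>k\<in>{1..n}-{a,b}. (of_bool (a < k \<and> k < b \<and> v a < v k \<and> v k < v b) :: int))"
    have f: "int (inv_count n (v \<circ> transpose a b)) = int (inv_count n v) + 1 + 2 * S"
      unfolding S_def by (rule inv_swap_formula[OF v ab True])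
    have "S = 0 \<longleftrightarrow> (\<forall>k\<in>{1..n}-{a,b}. \<not> (a < k \<and> k < b \<and> v a < v k \<and> v k < v b))"
      unfolding S_def by (subst sum_nonneg_eq_0_iff) auto
    also have "\<dots> \<longleftrightarrow> (\<forall>k. a < k \<longrightarrow> k < b \<longrightarrow> \<not> (v a < v k \<and> v k < v b))"
      using ab by auto
    finally have "S = 0 \<longleftrightarrow> Up v a b" using True unfolding Up_def by simp
    moreover have "inv_count n (v \<circ> transpose a b) = inv_count n v + 1 \<longleftrightarrow> S = 0"
      using f by linarith
    ultimately show ?thesis using covers_swap_iff_inv[OF ab] by simp
  next
    case False
    then have lt: "v b < v a" using neq by simp
    define w where "w = v \<circ> transpose a b"
    have w: "w permutes {1..n}" unfolding w_def using ab
      by (intro permutes_compose[OF _ v] permutes_swap_id) auto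
    have wv: "w \<circ> transpose a b = v" unfolding w_def by (simp add: comp_assoc)
    have "w a < w b" using lt ab by (simp add: w_def)
    from inv_swap_formula[OF w ab this] wv
    have "int (inv_count n v) \<ge> int (inv_count n w) + 1"
      by (simp add: sum_nonneg)
    then have "\<not> covers n v (v \<circ> transpose a b)"
      using covers_swap_iff_inv[OF ab] unfolding w_def by simp
    moreover have "\<not> Up v a b" using lt unfolding Up_def by simp
    ultimately show ?thesis by simp
  qed
qed

lemma d_act_eq:
  assumes "1 \<le> a" "a < b" "b \<le> n"
  shows "d_act n a b F v = (if v permutes {1..n} \<and> Up v a b then F (v \<circ> transpose a b) else 0)"
  unfolding d_act_def using covers_iff[OF _ assms] by auto

lemma covers_inv: "covers n u w \<Longrightarrow> inv_count n w = inv_count n u + 1"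
  unfolding covers_def by blast

lemma d_act_twice: "d_act n a b (d_act n a b F) v = 0"
proof -
  have "\<not> (covers n v (v \<circ> transpose a b) \<and> covers n (v \<circ> transpose a b) (v \<circ> transpose a b \<circ> transpose a b))"
    by (auto simp: comp_assoc dest!: covers_inv)
  then show ?thesis unfolding d_act_def by auto
qed



lemma op_add_apply[simp]: "op_add A B F v = A F v + B F v" by (simp add: op_add_def)
lemma op_neg_apply[simp]: "op_neg A F v = - A F v" by (simp add: op_neg_def)
lemma op_scal_apply[simp]: "op_scal c F v = c * F v" by (simp add: op_scal_def)
lemma op_zero_apply[simp]: "op_zero F v = 0" by (simp add: op_zero_def)
lemma op_sum_apply: "op_sum As F v = (\<Sum>A\<leftarrow>As. A F v)"
  by (induction As) (auto simp: op_sum_def)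
lemma act_prod_Nil[simp]: "act_prod F [] = F" by (simp add: act_prod_def)
lemma act_prod_Cons[simp]: "act_prod F (A # As) = act_prod (A F) As" by (simp add: act_prod_def)
lemma act_prod_append: "act_prod F (As @ Bs) = act_prod (act_prod F As) Bs" by (simp add: act_prod_def)

lemma B_apply: "B_op n i j F v = (\<Sum>k=1..i. d_act n k j F v)"
proof -
  have "B_op n i j F v = (\<Sum>k\<leftarrow>[1..<i+1]. d_act n k j F v)"
    unfolding B_op_def op_sum_apply by (simp add: comp_def)
  also have "\<dots> = (\<Sum>k\<in>set [1..<i+1]. d_act n k j F v)"
    by (rule interv_sum_list_conv_sum_set_nat)
  also have "set [1..<i+1] = {1..i}" by auto
  finally show ?thesis .
qed

lemma theta_apply: "theta_op n i F v = - (\<Sum>j\<in>{1..<i}. d_act n j i F v) + (\<Sum>j\<in>{i<..n}. d_act n i j F v)"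
proof -
  have a: "(\<Sum>j\<leftarrow>[1..<i]. d_act n j i F v) = (\<Sum>j\<in>{1..<i}. d_act n j i F v)"
    by (simp only: interv_sum_list_conv_sum_set_nat set_upt)
  have b: "(\<Sum>j\<leftarrow>[i+1..<n+1]. d_act n i j F v) = (\<Sum>j\<in>{i<..n}. d_act n i j F v)"
  proof -
    have "set [i+1..<n+1] = {i<..n}" by auto
    then show ?thesis by (simp only: interv_sum_list_conv_sum_set_nat)
  qed
  show ?thesis unfolding theta_op_def op_add_apply op_neg_apply op_sum_apply
    using a b by (simp add: comp_def)
qed

definition fT :: "nat \<Rightarrow> 'a::comm_ring_1 \<Rightarrow> nat \<Rightarrow> 'a op" where
  "fT n s j = op_add (op_scal s) (op_neg (theta_op n j))"
definition fB :: "nat \<Rightarrow> 'a::comm_ring_1 \<Rightarrow> nat \<Rightarrow> nat \<Rightarrow> 'a op" where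
  "fB n s i j = op_add (op_scal s) (B_op n i j)"

lemma fT_apply: "fT n s j F v = s * F v - theta_op n j F v" by (simp add: fT_def)
lemma fB_apply: "fB n s i j F v = s * F v + B_op n i j F v" by (simp add: fB_def)

definition good :: "nat \<Rightarrow> nat \<Rightarrow> 'a::comm_ring_1 grp_elt \<Rightarrow> bool" where
  "good n i F \<longleftrightarrow> (\<forall>v. F v \<noteq> 0 \<longrightarrow> v permutes {1..n} \<and> (\<forall>p q. i < p \<longrightarrow> p < q \<longrightarrow> q \<le> n \<longrightarrow> v q < v p))"

lemma d_act_nz:
  assumes "d_act n a b F v \<noteq> 0"
  shows "v permutes {1..n}" "F (v \<circ> transpose a b) \<noteq> 0" "covers n v (v \<circ> transpose a b)"
  using assms unfolding d_act_def by (auto split: if_splits)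

lemma d_act_nz_Up:
  assumes "d_act n a b F v \<noteq> 0" "1 \<le> a" "a < b" "b \<le> n"
  shows "v permutes {1..n}" "F (v \<circ> transpose a b) \<noteq> 0" "Up v a b"
  using d_act_nz[OF assms(1)] covers_iff[OF _ assms(2-4)] by auto

lemma B_nz:
  assumes "B_op n i j F v \<noteq> 0"
  obtains k where "1 \<le> k" "k \<le> i" "d_act n k j F v \<noteq> 0"
proof -
  from assms have "(\<Sum>k=1..i. d_act n k j F v) \<noteq> 0" by (simp add: B_apply)
  then obtain k where "k \<in> {1..i}" "d_act n k j F v \<noteq> 0"
    by (meson sum.not_neutral_contains_not_neutral)
  then show ?thesis using that by auto
qed

lemma perm_swap_apply:
  "(v \<circ> transpose a b) x = (if x = a then v b else if x = b then v a else v x)"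
  by (simp add: transpose_def)

lemma d_far_zero:
  assumes g: "good n i F" and c: "c = Suc i" and b: "c + 1 < b" "b \<le> n"
  shows "d_act n c b F v = 0"
proof (rule ccontr)
  assume nz: "d_act n c b F v \<noteq> 0"
  have r: "1 \<le> c" "c < b" using c b by auto
  note h = d_act_nz_Up[OF nz r b(2)]
  define u where "u = v \<circ> transpose c b"
  have "u (c+1) < u c" "u b < u (c+1)" using g h(2) b c unfolding good_def u_def[symmetric] by auto
  then have "v c < v (c+1)" "v (c+1) < v b" using b unfolding u_def by (auto simp: perm_swap_apply)
  moreover have "c < c + 1" "c + 1 < b" using b by auto
  ultimately show False using h(3) unfolding Up_def by blast
qed

lemma fT_eq:
  assumes g: "good n i F" and c: "c = Suc i" "c < n"
  shows "fT n s c F v = s * F v + B_op n i c F v - d_act n c (c+1) F v"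
proof -
  have s1: "(\<Sum>j\<in>{1..<c}. d_act n j c F v) = B_op n i c F v"
    unfolding B_apply using c by (simp add: atLeastLessThanSuc_atLeastAtMost)
  have "{c<..n} = insert (c+1) {c+1<..n}" using c by auto
  then have "(\<Sum>j\<in>{c<..n}. d_act n c j F v) = d_act n c (c+1) F v + (\<Sum>j\<in>{c+1<..n}. d_act n c j F v)"
    by simp
  also have "(\<Sum>j\<in>{c+1<..n}. d_act n c j F v) = 0"
    using d_far_zero[OF g c(1)] by (intro sum.neutral) auto
  finally show ?thesis unfolding fT_apply theta_apply s1 by simp
qed

lemma good_mono: "good n i F \<Longrightarrow> i \<le> i' \<Longrightarrow> good n i' F"
  unfolding good_def by auto

lemma good_fT:
  assumes g: "good n i F" and c: "c = Suc i" "c < n" "1 \<le> i"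
  shows "good n c (fT n s c F)"
  unfolding good_def
proof (intro allI impI)
  fix v assume nz: "fT n s c F v \<noteq> 0"
  then have "F v \<noteq> 0 \<or> B_op n i c F v \<noteq> 0 \<or> d_act n c (c+1) F v \<noteq> 0"
    unfolding fT_eq[OF g c(1,2)] by auto
  then show "v permutes {1..n} \<and> (\<forall>p q. c < p \<longrightarrow> p < q \<longrightarrow> q \<le> n \<longrightarrow> v q < v p)"
  proof (elim disjE)
    assume "F v \<noteq> 0" then show ?thesis using g c unfolding good_def by auto
  next
    assume "B_op n i c F v \<noteq> 0"
    then obtain k where k: "1 \<le> k" "k \<le> i" "d_act n k c F v \<noteq> 0" by (rule B_nz)
    note h = d_act_nz[OF k(3)]
    define u where "u = v \<circ> transpose k c"
    have u: "\<forall>p q. i < p \<longrightarrow> p < q \<longrightarrow> q \<le> n \<longrightarrow> u q < u p" using g h(2) unfolding good_def u_def by auto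
    have "v q < v p" if "c < p" "p < q" "q \<le> n" for p q
    proof -
      have "u q < u p" using u that c by auto
      moreover have "u q = v q" "u p = v p" using that k c by (auto simp: u_def perm_swap_apply)
      ultimately show ?thesis by simp
    qed
    then show ?thesis using h(1) by auto
  next
    assume nz2: "d_act n c (c+1) F v \<noteq> 0"
    note h = d_act_nz[OF nz2]
    define u where "u = v \<circ> transpose c (c+1)"
    have u: "\<forall>p q. i < p \<longrightarrow> p < q \<longrightarrow> q \<le> n \<longrightarrow> u q < u p" using g h(2) unfolding good_def u_def by auto
    have "v q < v p" if "c < p" "p < q" "q \<le> n" for p q
    proof (cases "p = c + 1")
      case True
      have "u q < u c" using u that c by auto
      moreover have "u q = v q" "u c = v p" using that True by (auto simp: u_def perm_swap_apply)
      ultimately show ?thesis by simp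
    next
      case False
      have "u q < u p" using u that c by auto
      moreover have "u q = v q" "u p = v p" using that False by (auto simp: u_def perm_swap_apply)
      ultimately show ?thesis by simp
    qed
    then show ?thesis using h(1) by auto
  qed
qed




lemma perm_swapped:
  assumes "v permutes {1..n}" "a \<in> {1..n}" "b \<in> {1..n}"
  shows "(v \<circ> transpose a b) permutes {1..n}"
  using assms by (intro permutes_compose[OF _ assms(1)] permutes_swap_id) auto

lemma DB_comm:
  assumes r: "1 \<le> a" "a < c" "c + 1 \<le> n" and T: "\<forall>u. F u \<noteq> 0 \<longrightarrow> u (c+1) < u c"
  shows "d_act n c (c+1) (d_act n a c F) v = d_act n a (c+1) (d_act n c (c+1) F) v"
proof -
  define s where "s = transpose c (c+1)"
  define t where "t = transpose a c"
  define t' where "t' = transpose a (c+1)"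
  have r1: "1 \<le> c" "c < c + 1" "1 \<le> a" "a < c + 1" using r by auto
  have comp_eq: "v \<circ> t' \<circ> s = v \<circ> s \<circ> t" using r
    by (auto simp: fun_eq_iff transpose_def s_def t_def t'_def)
  have L: "d_act n c (c+1) (d_act n a c F) v = (if v permutes {1..n} \<and> Up v c (c+1) then
       (if (v \<circ> s) permutes {1..n} \<and> Up (v \<circ> s) a c then F (v \<circ> s \<circ> t) else 0) else 0)"
    using r r1 by (simp add: d_act_eq s_def t_def)
  have R: "d_act n a (c+1) (d_act n c (c+1) F) v = (if v permutes {1..n} \<and> Up v a (c+1) then
       (if (v \<circ> t') permutes {1..n} \<and> Up (v \<circ> t') c (c+1) then F (v \<circ> t' \<circ> s) else 0) else 0)"
    using r r1 by (simp add: d_act_eq s_def t'_def)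
  show ?thesis
  proof (cases "v permutes {1..n} \<and> F (v \<circ> s \<circ> t) \<noteq> 0")
    case False
    then show ?thesis unfolding L R comp_eq by auto
  next
    case True
    then have v: "v permutes {1..n}" and Fnz: "F (v \<circ> s \<circ> t) \<noteq> 0" by auto
    have ps1: "(v \<circ> s) permutes {1..n}"
      unfolding s_def by (rule perm_swapped[OF v]) (use r in auto)
    have ps2: "(v \<circ> t') permutes {1..n}"
      unfolding t'_def by (rule perm_swapped[OF v]) (use r in auto)
    note ps = ps1 ps2
    have "(v \<circ> s \<circ> t) (c+1) < (v \<circ> s \<circ> t) c" using T Fnz by blast
    then have ca: "v c < v a" using r by (simp add: s_def t_def transpose_def)
    have inj: "inj v" using v by (rule permutes_inj)
    have vals1: "(v \<circ> s) a = v a" "(v \<circ> s) c = v (c+1)" "\<And>k. a < k \<Longrightarrow> k < c \<Longrightarrow> (v \<circ> s) k = v k"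
      using r by (auto simp: s_def transpose_def)
    have vals2: "(v \<circ> t') c = v c" "(v \<circ> t') (c+1) = v a"
      using r by (auto simp: t'_def transpose_def)
    have nok: "\<And>k. c < k \<Longrightarrow> k < c + 1 \<Longrightarrow> False" by simp
    have up1: "Up v c (c+1) \<longleftrightarrow> v c < v (c+1)" unfolding Up_def using nok by blast
    have up2: "Up (v \<circ> s) a c \<longleftrightarrow> v a < v (c+1) \<and> (\<forall>k. a < k \<longrightarrow> k < c \<longrightarrow> \<not> (v a < v k \<and> v k < v (c+1)))"
      unfolding Up_def vals1 using vals1(3) by auto
    have up3: "Up (v \<circ> t') c (c+1) \<longleftrightarrow> v c < v a" unfolding Up_def vals2 using nok by blast
    have up4: "Up v a (c+1) \<longleftrightarrow> v a < v (c+1) \<and> (\<forall>k. a < k \<longrightarrow> k < c \<longrightarrow> \<not> (v a < v k \<and> v k < v (c+1)))"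
    proof -
      have "(\<forall>k. a < k \<longrightarrow> k < c + 1 \<longrightarrow> \<not> (v a < v k \<and> v k < v (c+1))) \<longleftrightarrow>
            (\<forall>k. a < k \<longrightarrow> k < c \<longrightarrow> \<not> (v a < v k \<and> v k < v (c+1)))"
        using ca r by (metis less_Suc_eq less_asym' Suc_eq_plus1)
      then show ?thesis unfolding Up_def by simp
    qed
    have "(Up v c (c+1) \<and> Up (v \<circ> s) a c) \<longleftrightarrow> (Up v a (c+1) \<and> Up (v \<circ> t') c (c+1))"
      unfolding up1 up2 up3 up4 using ca by auto
    then show ?thesis unfolding L R comp_eq using v ps by auto
  qed
qed



definition InvP :: "nat \<Rightarrow> nat \<Rightarrow> nat \<Rightarrow> 'a::comm_ring_1 grp_elt \<Rightarrow> bool" where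
  "InvP n c q H \<longleftrightarrow> (\<forall>v. H v \<noteq> 0 \<longrightarrow> v permutes {1..n} \<and> v (c+1) < v c \<and> (\<forall>k. q < k \<longrightarrow> k \<le> n \<longrightarrow> v k < v (c+1)))"

lemma good_InvP:
  assumes "good n i F" "c = Suc i" "c < n"
  shows "InvP n c (c+1) F"
  using assms unfolding good_def InvP_def by auto

lemma fB_nz:
  assumes "fB n s i j H v \<noteq> 0"
  shows "H v \<noteq> 0 \<or> (\<exists>k. 1 \<le> k \<and> k \<le> i \<and> d_act n k j H v \<noteq> 0)"
proof (cases "H v = 0")
  case True
  then have "B_op n i j H v \<noteq> 0" using assms by (simp add: fB_apply)
  then obtain k where "1 \<le> k" "k \<le> i" "d_act n k j H v \<noteq> 0" by (rule B_nz)
  then show ?thesis by blast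
qed simp



lemma InvP_step_c:
  assumes H: "InvP n c (c+1) H" and c: "c = Suc i" "1 \<le> i" "c < n"
  shows "InvP n c (c+1) (fB n s i c H)"
  unfolding InvP_def
proof (intro allI impI)
  fix v assume "fB n s i c H v \<noteq> 0"
  from fB_nz[OF this] show "v permutes {1..n} \<and> v (c+1) < v c \<and> (\<forall>k. c+1 < k \<longrightarrow> k \<le> n \<longrightarrow> v k < v (c+1))"
  proof
    assume "H v \<noteq> 0" then show ?thesis using H unfolding InvP_def by blast
  next
    assume "\<exists>k. 1 \<le> k \<and> k \<le> i \<and> d_act n k c H v \<noteq> 0"
    then obtain k where k: "1 \<le> k" "k \<le> i" "d_act n k c H v \<noteq> 0" by blast
    have kc: "k < c" "c \<le> n" using k c by auto
    note h = d_act_nz_Up[OF k(3) k(1) kc]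
    define u where "u = v \<circ> transpose k c"
    have u: "u (c+1) < u c" "\<And>p. c + 1 < p \<Longrightarrow> p \<le> n \<Longrightarrow> u p < u (c+1)"
      using H h(2) unfolding InvP_def u_def[symmetric] by blast+
    have e: "u c = v k" "u (c+1) = v (c+1)" "\<And>p. c + 1 < p \<Longrightarrow> u p = v p"
      using kc by (auto simp: u_def transpose_def)
    have "v k < v c" using h(3) unfolding Up_def by simp
    then show ?thesis using u e h(1) by force
  qed
qed




lemma InvP_step_c1:
  assumes H: "InvP n c (c+1) H" and c: "c = Suc i" "1 \<le> i" "c < n"
  shows "InvP n c (c+1) (fB n s i (c+1) H)"
  unfolding InvP_def
proof (intro allI impI)
  fix v assume "fB n s i (c+1) H v \<noteq> 0"
  from fB_nz[OF this] show "v permutes {1..n} \<and> v (c+1) < v c \<and> (\<forall>k. c+1 < k \<longrightarrow> k \<le> n \<longrightarrow> v k < v (c+1))"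
  proof
    assume "H v \<noteq> 0" then show ?thesis using H unfolding InvP_def by blast
  next
    assume "\<exists>k. 1 \<le> k \<and> k \<le> i \<and> d_act n k (c+1) H v \<noteq> 0"
    then obtain k where k: "1 \<le> k" "k \<le> i" "d_act n k (c+1) H v \<noteq> 0" by blast
    have kc: "k < c + 1" "c + 1 \<le> n" using k c by auto
    note h = d_act_nz_Up[OF k(3) k(1) kc]
    define u where "u = v \<circ> transpose k (c+1)"
    have Hu: "u (c+1) < u c \<and> (\<forall>p. c + 1 < p \<longrightarrow> p \<le> n \<longrightarrow> u p < u (c+1))"
      using H h(2) unfolding InvP_def u_def[symmetric] by blast
    have kne: "c \<noteq> k" "c \<noteq> c + 1" "k \<noteq> c + 1" using k c by auto
    have e: "u c = v c" "u (c+1) = v k"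
      unfolding u_def using kne by simp_all
    have e2: "u p = v p" if "c + 1 < p" for p using that kc by (simp add: u_def transpose_def)
    have nb: "\<forall>m. k < m \<longrightarrow> m < c + 1 \<longrightarrow> \<not> (v k < v m \<and> v m < v (c+1))"
      and lt: "v k < v (c+1)" using h(3) unfolding Up_def by blast+
    have nb1: "\<not> (v k < v c \<and> v c < v (c+1))" using nb[rule_format, of c] k c by simp
    have "v c \<noteq> v (c+1)" using permutes_inj[OF h(1)] kne(2) by (metis injD)
    moreover have "v k < v c" using Hu e by simp
    ultimately have A: "v (c+1) < v c" using nb1 by auto
    have B: "v p < v (c+1)" if "c + 1 < p" "p \<le> n" for p
    proof -
      have "u p < u (c+1)" using Hu that by blast
      then show ?thesis using e e2[OF that(1)] lt by simp
    qed
    show ?thesis using A B h(1) by blast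
  qed
qed




lemma InvP_far:
  assumes H: "InvP n c q H" and q: "c + 1 \<le> q" "j = Suc q" "j \<le> n" and c: "c = Suc i"
  shows "d_act n c j H v = 0" "InvP n c j (fB n s i j H)"
proof -
  show "d_act n c j H v = 0"
  proof (rule ccontr)
    assume nz: "d_act n c j H v \<noteq> 0"
    have r: "1 \<le> c" "c < j" using q c by auto
    note h = d_act_nz_Up[OF nz r q(3)]
    define u where "u = v \<circ> transpose c j"
    have Hu: "u (c+1) < u c \<and> (\<forall>k. q < k \<longrightarrow> k \<le> n \<longrightarrow> u k < u (c+1))"
      using H h(2) unfolding InvP_def u_def[symmetric] by blast
    then have u1: "u (c+1) < u c" and u2: "u j < u (c+1)" using q by auto
    have cc: "c + 1 \<noteq> c" "c + 1 \<noteq> j" using q by auto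
    have e: "u c = v j" "u (c+1) = v (c+1)" "u j = v c"
      unfolding u_def using cc by simp_all
    have nb: "\<forall>k. c < k \<longrightarrow> k < j \<longrightarrow> \<not> (v c < v k \<and> v k < v j)" using h(3) unfolding Up_def by blast
    have "\<not> (v c < v (c+1) \<and> v (c+1) < v j)" using nb[rule_format, of "c+1"] q by simp
    then show False using u1 u2 e by simp
  qed
  show "InvP n c j (fB n s i j H)"
    unfolding InvP_def
  proof (intro allI impI)
    fix v assume "fB n s i j H v \<noteq> 0"
    from fB_nz[OF this] show "v permutes {1..n} \<and> v (c+1) < v c \<and> (\<forall>k. j < k \<longrightarrow> k \<le> n \<longrightarrow> v k < v (c+1))"
    proof
      assume "H v \<noteq> 0"
      then have "v permutes {1..n} \<and> v (c+1) < v c \<and> (\<forall>k. q < k \<longrightarrow> k \<le> n \<longrightarrow> v k < v (c+1))"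
        using H unfolding InvP_def by blast
      then show ?thesis using q by auto
    next
      assume "\<exists>k. 1 \<le> k \<and> k \<le> i \<and> d_act n k j H v \<noteq> 0"
      then obtain k where k: "1 \<le> k" "k \<le> i" "d_act n k j H v \<noteq> 0" by blast
      note h = d_act_nz[OF k(3)]
      define u where "u = v \<circ> transpose k j"
      have Hu: "u (c+1) < u c \<and> (\<forall>p. q < p \<longrightarrow> p \<le> n \<longrightarrow> u p < u (c+1))"
        using H h(2) unfolding InvP_def u_def[symmetric] by blast
      have e1: "u c = v c" "u (c+1) = v (c+1)" using k c q by (simp_all add: u_def transpose_def)
      have e2: "u p = v p" if "j < p" for p using k c q that by (simp add: u_def transpose_def)
      have "v p < v (c+1)" if "j < p" "p \<le> n" for p
      proof -
        have "q < p" using that q by simp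
        then have "u p < u (c+1)" using Hu that(2) by blast
        then show ?thesis using e1 e2[OF that(1)] by simp
      qed
      then show ?thesis using Hu e1 h(1) by auto
    qed
  qed
qed


lemma B_Suc: "B_op n (Suc i) j F v = B_op n i j F v + d_act n (Suc i) j F v"
  unfolding B_apply by simp

lemma InvP_tail:
  assumes "InvP n c q H" "c + 1 \<le> q" "c = Suc i"
  shows "act_prod H (map (fB n s c) [q+1..<n+1]) = act_prod H (map (fB n s i) [q+1..<n+1])"
  using assms
proof (induction "n - q" arbitrary: q H)
  case 0
  then show ?case by simp
next
  case (Suc m)
  have ql: "q + 1 < n + 1" using Suc.hyps by simp
  then have up: "[q+1..<n+1] = (q+1) # [Suc q+1..<n+1]" by (simp add: upt_conv_Cons)
  note far = InvP_far[OF Suc.prems(1) Suc.prems(2) refl _ Suc.prems(3)]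
  have eq: "fB n s c (q+1) H = fB n s i (q+1) H"
    using far(1) ql Suc.prems(3) by (auto simp: fun_eq_iff fB_apply B_Suc)
  have inv': "InvP n c (Suc q) (fB n s i (Suc q) H)" using far(2) ql by simp
  have "m = n - Suc q" using Suc.hyps by simp
  from Suc.hyps(1)[OF this inv'] Suc.prems(2,3)
  have ih: "act_prod (fB n s i (Suc q) H) (map (fB n s c) [Suc q+1..<n+1]) =
            act_prod (fB n s i (Suc q) H) (map (fB n s i) [Suc q+1..<n+1])" by simp
  show ?case unfolding up using eq ih by simp
qed




lemma d_act_lin: "d_act n a b (\<lambda>v. s * F v + G v - H v) w = s * d_act n a b F w + d_act n a b G w - d_act n a b H w"
  by (simp add: d_act_def)

lemma d_act_lin2: "d_act n a b (\<lambda>v. s * F v + G v) w = s * d_act n a b F w + d_act n a b G w"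
  by (simp add: d_act_def)

lemma d_act_sum: "d_act n a b (\<lambda>v. \<Sum>k\<in>A. g k v) w = (\<Sum>k\<in>A. d_act n a b (g k) w)"
  unfolding d_act_def by (cases "w permutes {1..n}"; cases "covers n w (w \<circ> transpose a b)") simp_all

lemma B_lin: "B_op n i j (\<lambda>v. s * F v + G v - H v) w = s * B_op n i j F w + B_op n i j G w - B_op n i j H w"
  by (simp add: B_apply d_act_lin sum.distrib sum_subtractf sum_distrib_left)

lemma B_lin2: "B_op n i j (\<lambda>v. s * F v + G v) w = s * B_op n i j F w + B_op n i j G w"
  by (simp add: B_apply d_act_lin2 sum.distrib sum_distrib_left)

lemma B_fun: "B_op n i j F = (\<lambda>v. \<Sum>k=1..i. d_act n k j F v)"
  by (simp add: fun_eq_iff B_apply)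

lemma key_swap:
  fixes F :: "'a::comm_ring_1 grp_elt"
  assumes g: "good n i F" and c: "c = Suc i" "c < n" "1 \<le> i"
  shows "fB n s c (c+1) (fT n s c F) = fB n s i (c+1) (fB n s i c F)"
proof (rule ext)
  fix w
  define G where "G = fT n s c F"
  define D :: "'a op" where "D = d_act n c (c+1)"
  have G: "G = (\<lambda>v. s * F v + B_op n i c F v - D F v)"
    unfolding G_def D_def using fT_eq[OF g c(1,2)] by (simp add: fun_eq_iff)
  have T: "\<forall>u. F u \<noteq> 0 \<longrightarrow> u (c+1) < u c"
    using g c unfolding good_def by auto
  have DD: "D (D F) w = 0" unfolding D_def by (rule d_act_twice)
  have DB: "D (B_op n i c F) w = B_op n i (c+1) (D F) w"
  proof -
    have "D (B_op n i c F) w = (\<Sum>k=1..i. D (d_act n k c F) w)"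
      unfolding B_fun D_def by (rule d_act_sum)
    also have "\<dots> = (\<Sum>k=1..i. d_act n k (c+1) (D F) w)"
      unfolding D_def using c T by (intro sum.cong refl DB_comm) auto
    also have "\<dots> = B_op n i (c+1) (D F) w" by (simp add: B_apply)
    finally show ?thesis .
  qed
  have "fB n s c (c+1) G w = s * G w + B_op n i (c+1) G w + D G w"
    unfolding fB_apply c(1) B_Suc D_def by simp
  also have "\<dots> = s * (s * F w + B_op n i c F w - D F w)
      + (s * B_op n i (c+1) F w + B_op n i (c+1) (B_op n i c F) w - B_op n i (c+1) (D F) w)
      + (s * D F w + D (B_op n i c F) w - D (D F) w)"
    unfolding G B_lin D_def d_act_lin by simp
  also have "\<dots> = s * (s * F w + B_op n i c F w) + (s * B_op n i (c+1) F w + B_op n i (c+1) (B_op n i c F) w)"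
    using DD DB by (simp add: algebra_simps)
  also have "\<dots> = fB n s i (c+1) (fB n s i c F) w"
    by (simp add: fB_apply fB_def op_add_def op_scal_def B_lin2)
  finally show "fB n s c (c+1) (fT n s c F) w = fB n s i (c+1) (fB n s i c F) w" unfolding G_def .
qed

lemma good_fB_step:
  assumes H: "good n (Suc i) H" and j: "Suc i \<le> j" "j \<le> n"
  shows "good n (Suc i) (fB n s i j H)"
  unfolding good_def
proof (intro allI impI)
  fix v assume "fB n s i j H v \<noteq> 0"
  from fB_nz[OF this] show "v permutes {1..n} \<and> (\<forall>p q. Suc i < p \<longrightarrow> p < q \<longrightarrow> q \<le> n \<longrightarrow> v q < v p)"
  proof
    assume "H v \<noteq> 0" then show ?thesis using H unfolding good_def by blast
  next
    assume "\<exists>k. 1 \<le> k \<and> k \<le> i \<and> d_act n k j H v \<noteq> 0"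
    then obtain k where k: "1 \<le> k" "k \<le> i" "d_act n k j H v \<noteq> 0" by blast
    have kj: "k < j" using k j by simp
    note h = d_act_nz_Up[OF k(3) k(1) kj j(2)]
    define u where "u = v \<circ> transpose k j"
    have Hu: "\<forall>p q. Suc i < p \<longrightarrow> p < q \<longrightarrow> q \<le> n \<longrightarrow> u q < u p"
      using H h(2) unfolding good_def u_def[symmetric] by blast
    have nb: "\<forall>m. k < m \<longrightarrow> m < j \<longrightarrow> \<not> (v k < v m \<and> v m < v j)"
      and lt: "v k < v j" using h(3) unfolding Up_def by blast+
    have inj: "inj v" using h(1) by (rule permutes_inj)
    have ev: "u x = (if x = k then v j else if x = j then v k else v x)" for x
      unfolding u_def by (simp add: transpose_def)
    have "v q < v p" if pq: "Suc i < p" "p < q" "q \<le> n" for p q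
    proof -
      have pk: "p \<noteq> k" "q \<noteq> k" using pq k by auto
      have uqp: "u q < u p" using Hu pq by blast
      show ?thesis
      proof (cases "q = j")
        case True
        have "p \<noteq> j" using pq True by simp
        then have "u p = v p" "u q = v k" using ev pk True by auto
        then have "v k < v p" using uqp by simp
        moreover have "\<not> (v k < v p \<and> v p < v j)" using nb[rule_format, of p] pq True k by simp
        moreover have "v p \<noteq> v j" using inj \<open>p \<noteq> j\<close> by (metis injD)
        ultimately show ?thesis using True by auto
      next
        case False
        show ?thesis
        proof (cases "p = j")
          case True
          then have "u p = v k" "u q = v q" using ev pk False by auto
          then show ?thesis using uqp lt True by simp
        next
          case False2: False
          then have "u p = v p" "u q = v q" using ev pk False by auto
          then show ?thesis using uqp by simp
        qed
      qed
    qed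
    then show ?thesis using h(1) by blast
  qed
qed

lemma good_row:
  assumes "good n (Suc i) H" "\<forall>j\<in>set js. Suc i \<le> j \<and> j \<le> n"
  shows "good n (Suc i) (act_prod H (map (fB n s i) js))"
  using assms
proof (induction js arbitrary: H)
  case Nil then show ?case by simp
next
  case (Cons j js)
  have "good n (Suc i) (fB n s i j H)" using Cons.prems by (intro good_fB_step) auto
  then show ?case using Cons by simp
qed

lemma base_eq:
  assumes "2 \<le> n"
  shows "fT n s n = fB n s (n - 1) n"
proof (intro ext)
  fix F :: "'a grp_elt" and w
  have "{1..<n} = {1..n-1}" using assms by auto
  then show "fT n s n F w = fB n s (n - 1) n F w"
    by (simp add: fT_apply fB_apply theta_apply B_apply)
qed

lemma row_claim:
  fixes F :: "'a::comm_ring_1 grp_elt" and s :: 'a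
  assumes "1 \<le> i" "i < n" "good n i F"
  shows "act_prod F (map (fT n s) [i+1..<n+1]) = act_prod F (map (fB n s i) [i+1..<n+1])"
proof -
  have "\<And>i (F :: 'a grp_elt). n - i = m \<Longrightarrow> 1 \<le> i \<Longrightarrow> i < n \<Longrightarrow> good n i F \<Longrightarrow>
    act_prod F (map (fT n s) [i+1..<n+1]) = act_prod F (map (fB n s i) [i+1..<n+1])" for m
  proof (induction m)
    case 0 then show ?case by simp
  next
    case (Suc m)
    show ?case
    proof (cases "m = 0")
      case True
      then have i: "i = n - 1" "2 \<le> n" using Suc.prems by auto
      then have l: "[i+1..<n+1] = [n]" by simp
      have "fT n s n F = fB n s (n-1) n F" by (rule fun_cong[OF base_eq[OF i(2)]])
      then show ?thesis using l i by simp
    next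
      case False
      define c where "c = Suc i"
      have c: "c < n" "n - c = m" using Suc.prems False by (auto simp: c_def)
      have g: "good n i F" using Suc.prems by simp
      have up1: "[i+1..<n+1] = c # [c+1..<n+1]" using c by (simp add: c_def upt_conv_Cons)
      have up2: "[c+1..<n+1] = (c+1) # [c+1+1..<n+1]" using c by (simp add: upt_conv_Cons)
      have gG: "good n c (fT n s c F)" using good_fT[OF g c_def c(1)] Suc.prems by simp
      have IH: "act_prod (fT n s c F) (map (fT n s) [c+1..<n+1]) = act_prod (fT n s c F) (map (fB n s c) [c+1..<n+1])"
        using Suc.IH[OF c(2) _ c(1) gG] by (simp add: c_def)
      define H where "H = fB n s i (c+1) (fB n s i c F)"
      have HI: "InvP n c (c+1) H"
        unfolding H_def using c Suc.prems
        by (intro InvP_step_c1 InvP_step_c good_InvP[OF g]) (auto simp: c_def)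
      have "act_prod F (map (fT n s) [i+1..<n+1]) = act_prod (fT n s c F) (map (fB n s c) [c+1..<n+1])"
        unfolding up1 using IH by simp
      also have "\<dots> = act_prod H (map (fB n s c) [c+1+1..<n+1])"
        unfolding up2 H_def using key_swap[OF g c_def c(1)] Suc.prems by simp
      also have "\<dots> = act_prod H (map (fB n s i) [c+1+1..<n+1])"
        by (rule InvP_tail[OF HI _ c_def]) simp
      also have "\<dots> = act_prod F (map (fB n s i) [i+1..<n+1])"
        unfolding up1 up2 H_def by simp
      finally show ?thesis .
    qed
  qed
  then show ?thesis using assms by blast
qed



definition NB :: "(nat \<Rightarrow> nat) \<Rightarrow> nat \<Rightarrow> nat \<Rightarrow> nat \<Rightarrow> nat \<Rightarrow> bool" where
  "NB w lo hi p q \<longleftrightarrow> (\<forall>k. p < k \<longrightarrow> k < q \<longrightarrow> \<not> (lo < w k \<and> w k < hi))"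

lemma Up_NB: "Up w p q \<longleftrightarrow> w p < w q \<and> NB w (w p) (w q) p q"
  unfolding Up_def NB_def by blast

lemma NB_cong: "(\<And>k. p < k \<Longrightarrow> k < q \<Longrightarrow> w' k = w k) \<Longrightarrow> NB w' lo hi p q \<longleftrightarrow> NB w lo hi p q"
  unfolding NB_def by auto

lemma NB_split:
  assumes "p < m" "m < q"
  shows "NB w lo hi p q \<longleftrightarrow> NB w lo hi p m \<and> \<not> (lo < w m \<and> w m < hi) \<and> NB w lo hi m q"
proof
  assume h: "NB w lo hi p q"
  show "NB w lo hi p m \<and> \<not> (lo < w m \<and> w m < hi) \<and> NB w lo hi m q"
    using h assms unfolding NB_def by auto
next
  assume h: "NB w lo hi p m \<and> \<not> (lo < w m \<and> w m < hi) \<and> NB w lo hi m q"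
  show "NB w lo hi p q" unfolding NB_def
  proof (intro allI impI)
    fix k assume k: "p < k" "k < q"
    consider "k < m" | "k = m" | "m < k" by linarith
    then show "\<not> (lo < w k \<and> w k < hi)" using h k unfolding NB_def by cases auto
  qed
qed

lemma NB_merge:
  assumes "lo < mid" "mid < hi" "\<And>k. p < k \<Longrightarrow> k < q \<Longrightarrow> w k \<noteq> mid"
  shows "NB w lo mid p q \<and> NB w mid hi p q \<longleftrightarrow> NB w lo hi p q"
proof
  assume h: "NB w lo mid p q \<and> NB w mid hi p q"
  show "NB w lo hi p q" unfolding NB_def
  proof (intro allI impI)
    fix k assume k: "p < k" "k < q"
    have "w k \<noteq> mid" using assms(3) k by blast
    then consider "w k < mid" | "mid < w k" by linarith
    then show "\<not> (lo < w k \<and> w k < hi)" using h k unfolding NB_def by cases auto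
  qed
next
  assume h: "NB w lo hi p q"
  show "NB w lo mid p q \<and> NB w mid hi p q" using h assms(1,2) unfolding NB_def by auto
qed

lemma NB_perm:
  assumes "\<And>k. p < k \<Longrightarrow> k < q \<Longrightarrow> p < t k \<and> t k < q" "\<And>k. t (t k) = k"
  shows "NB (w \<circ> t) lo hi p q \<longleftrightarrow> NB w lo hi p q"
  unfolding NB_def
proof
  assume h: "\<forall>k. p < k \<longrightarrow> k < q \<longrightarrow> \<not> (lo < (w \<circ> t) k \<and> (w \<circ> t) k < hi)"
  show "\<forall>k. p < k \<longrightarrow> k < q \<longrightarrow> \<not> (lo < w k \<and> w k < hi)"
  proof (intro allI impI)
    fix k assume k: "p < k" "k < q"
    then have "p < t k" "t k < q" using assms(1) by auto
    then show "\<not> (lo < w k \<and> w k < hi)" using h assms(2)[of k] by (metis comp_apply)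
  qed
next
  assume h: "\<forall>k. p < k \<longrightarrow> k < q \<longrightarrow> \<not> (lo < w k \<and> w k < hi)"
  show "\<forall>k. p < k \<longrightarrow> k < q \<longrightarrow> \<not> (lo < (w \<circ> t) k \<and> (w \<circ> t) k < hi)"
    using h assms(1) by auto
qed

lemma perm_sw:
  assumes "w permutes {1..n}" "1 \<le> a" "a \<le> n" "1 \<le> b" "b \<le> n"
  shows "(w \<circ> transpose a b) permutes {1..n}"
  using perm_swapped[OF assms(1)] assms(2-5) by simp

lemma if_split3:
  "(PL \<longleftrightarrow> P1 \<or> P2) \<Longrightarrow> \<not> (P1 \<and> P2) \<Longrightarrow>
   (if PL then a else 0) = (if P1 then a else 0) + (if P2 then (a::'a::comm_ring_1) else 0)"
  by auto

lemma tr_apply: "transpose a b k = (if k = a then b else if k = b then a else k)"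
  by (simp add: transpose_def)

lemma Rel1:
  assumes r: "1 \<le> x" "x < y" "y < z" "z \<le> n"
  shows "d_act n y z (d_act n x y F) w = d_act n x y (d_act n x z F) w + d_act n x z (d_act n y z F) w"
proof -
  have r2: "1 \<le> y" "x < z" "y \<le> n" "1 \<le> z" "x \<le> n" using r by auto
  define txy where "txy = transpose x y"
  define txz where "txz = transpose x z"
  define tyz where "tyz = transpose y z"
  define \<sigma> where "\<sigma> = w \<circ> tyz \<circ> txy"
  have s1: "w \<circ> txy \<circ> txz = \<sigma>" and s2: "w \<circ> txz \<circ> tyz = \<sigma>"
    using r by (auto simp: fun_eq_iff \<sigma>_def txy_def txz_def tyz_def tr_apply)
  have L: "d_act n y z (d_act n x y F) w = (if w permutes {1..n} \<and> Up w y z then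
      (if (w \<circ> tyz) permutes {1..n} \<and> Up (w \<circ> tyz) x y then F \<sigma> else 0) else 0)"
    using r r2 by (simp add: d_act_eq \<sigma>_def txy_def tyz_def)
  have R1: "d_act n x y (d_act n x z F) w = (if w permutes {1..n} \<and> Up w x y then
      (if (w \<circ> txy) permutes {1..n} \<and> Up (w \<circ> txy) x z then F \<sigma> else 0) else 0)"
    using r r2 s1 by (simp add: d_act_eq txy_def txz_def)
  have R2: "d_act n x z (d_act n y z F) w = (if w permutes {1..n} \<and> Up w x z then
      (if (w \<circ> txz) permutes {1..n} \<and> Up (w \<circ> txz) y z then F \<sigma> else 0) else 0)"
    using r r2 s2 by (simp add: d_act_eq txz_def tyz_def)
  show ?thesis
  proof (cases "w permutes {1..n}")
    case False then show ?thesis unfolding L R1 R2 by simp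
  next
    case True
    note v = True
    have ps1: "(w \<circ> tyz) permutes {1..n}" unfolding tyz_def by (rule perm_sw[OF v]) (use r r2 in auto)
    have ps2: "(w \<circ> txy) permutes {1..n}" unfolding txy_def by (rule perm_sw[OF v]) (use r r2 in auto)
    have ps3: "(w \<circ> txz) permutes {1..n}" unfolding txz_def by (rule perm_sw[OF v]) (use r r2 in auto)
    note ps = ps1 ps2 ps3
    have inj: "inj w" using v by (rule permutes_inj)
    define \<alpha> where "\<alpha> = w x"
    define \<beta> where "\<beta> = w y"
    define \<gamma> where "\<gamma> = w z"
    have nv0: "w k \<noteq> w m" if "k \<noteq> m" for k m using inj that by (meson injD)
    have ne: "\<alpha> \<noteq> \<beta>" "\<alpha> \<noteq> \<gamma>" "\<beta> \<noteq> \<gamma>" unfolding \<alpha>_def \<beta>_def \<gamma>_def using r by (auto intro!: nv0)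
    define N1 where "N1 = NB w \<alpha> \<gamma> x y"
    define N2 where "N2 = NB w \<beta> \<gamma> y z"
    have eL: "Up w y z \<and> Up (w \<circ> tyz) x y \<longleftrightarrow> \<beta> < \<gamma> \<and> \<alpha> < \<gamma> \<and> N1 \<and> N2"
    proof -
      have "Up (w \<circ> tyz) x y \<longleftrightarrow> \<alpha> < \<gamma> \<and> NB (w \<circ> tyz) \<alpha> \<gamma> x y"
        unfolding Up_NB using r by (simp add: tyz_def tr_apply \<alpha>_def \<gamma>_def)
      also have "NB (w \<circ> tyz) \<alpha> \<gamma> x y \<longleftrightarrow> N1"
        unfolding N1_def by (rule NB_cong) (use r in \<open>auto simp: tyz_def tr_apply\<close>)
      finally show ?thesis unfolding Up_NB N2_def \<beta>_def \<gamma>_def by auto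
    qed
    have eR1: "Up w x y \<and> Up (w \<circ> txy) x z \<longleftrightarrow> \<alpha> < \<beta> \<and> \<beta> < \<gamma> \<and> N1 \<and> N2"
    proof -
      have "Up (w \<circ> txy) x z \<longleftrightarrow> \<beta> < \<gamma> \<and> NB (w \<circ> txy) \<beta> \<gamma> x z"
        unfolding Up_NB using r by (simp add: txy_def tr_apply \<beta>_def \<gamma>_def)
      also have "NB (w \<circ> txy) \<beta> \<gamma> x z \<longleftrightarrow> NB (w \<circ> txy) \<beta> \<gamma> x y \<and> \<not> (\<beta> < \<alpha> \<and> \<alpha> < \<gamma>) \<and> NB (w \<circ> txy) \<beta> \<gamma> y z"
        using NB_split[of x y z "w \<circ> txy" \<beta> \<gamma>] r by (simp add: txy_def \<alpha>_def)
      also have "NB (w \<circ> txy) \<beta> \<gamma> x y \<longleftrightarrow> NB w \<beta> \<gamma> x y"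
        by (rule NB_cong) (use r in \<open>auto simp: txy_def tr_apply\<close>)
      also have "NB (w \<circ> txy) \<beta> \<gamma> y z \<longleftrightarrow> N2"
        unfolding N2_def by (rule NB_cong) (use r in \<open>auto simp: txy_def tr_apply\<close>)
      finally have A: "Up (w \<circ> txy) x z \<longleftrightarrow> \<beta> < \<gamma> \<and> NB w \<beta> \<gamma> x y \<and> \<not> (\<beta> < \<alpha> \<and> \<alpha> < \<gamma>) \<and> N2" .
      have B: "\<alpha> < \<beta> \<Longrightarrow> \<beta> < \<gamma> \<Longrightarrow> NB w \<alpha> \<beta> x y \<and> NB w \<beta> \<gamma> x y \<longleftrightarrow> N1"
        unfolding N1_def \<beta>_def by (rule NB_merge) (auto dest: injD[OF inj])
      have C: "Up w x y \<longleftrightarrow> \<alpha> < \<beta> \<and> NB w \<alpha> \<beta> x y" unfolding Up_NB \<alpha>_def \<beta>_def ..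
      show ?thesis unfolding A C using B by auto
    qed
    have eR2: "Up w x z \<and> Up (w \<circ> txz) y z \<longleftrightarrow> \<beta> < \<alpha> \<and> \<alpha> < \<gamma> \<and> N1 \<and> N2"
    proof -
      have A: "Up w x z \<longleftrightarrow> \<alpha> < \<gamma> \<and> N1 \<and> \<not> (\<alpha> < \<beta> \<and> \<beta> < \<gamma>) \<and> NB w \<alpha> \<gamma> y z"
        unfolding Up_NB N1_def using NB_split[of x y z w \<alpha> \<gamma>] r by (auto simp: \<alpha>_def \<beta>_def \<gamma>_def)
      have "Up (w \<circ> txz) y z \<longleftrightarrow> \<beta> < \<alpha> \<and> NB (w \<circ> txz) \<beta> \<alpha> y z"
        unfolding Up_NB using r by (simp add: txz_def tr_apply \<alpha>_def \<beta>_def)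
      also have "NB (w \<circ> txz) \<beta> \<alpha> y z \<longleftrightarrow> NB w \<beta> \<alpha> y z"
        by (rule NB_cong) (use r in \<open>auto simp: txz_def tr_apply\<close>)
      finally have C: "Up (w \<circ> txz) y z \<longleftrightarrow> \<beta> < \<alpha> \<and> NB w \<beta> \<alpha> y z" .
      have B: "\<beta> < \<alpha> \<Longrightarrow> \<alpha> < \<gamma> \<Longrightarrow> NB w \<beta> \<alpha> y z \<and> NB w \<alpha> \<gamma> y z \<longleftrightarrow> N2"
        unfolding N2_def \<alpha>_def using r by (intro NB_merge) (auto dest: injD[OF inj])
      show ?thesis unfolding A C using B by auto
    qed
    have X: "(Up w y z \<and> Up (w \<circ> tyz) x y) \<longleftrightarrow> (Up w x y \<and> Up (w \<circ> txy) x z) \<or> (Up w x z \<and> Up (w \<circ> txz) y z)"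
      unfolding eL eR1 eR2 using ne by auto
    have Y: "\<not> ((Up w x y \<and> Up (w \<circ> txy) x z) \<and> (Up w x z \<and> Up (w \<circ> txz) y z))"
      unfolding eR1 eR2 by auto
    have L': "d_act n y z (d_act n x y F) w = (if Up w y z \<and> Up (w \<circ> tyz) x y then F \<sigma> else 0)"
      unfolding L using v ps by simp
    have R1': "d_act n x y (d_act n x z F) w = (if Up w x y \<and> Up (w \<circ> txy) x z then F \<sigma> else 0)"
      unfolding R1 using v ps by simp
    have R2': "d_act n x z (d_act n y z F) w = (if Up w x z \<and> Up (w \<circ> txz) y z then F \<sigma> else 0)"
      unfolding R2 using v ps by simp
    show ?thesis unfolding L' R1' R2' by (rule if_split3[OF X Y])
  qed
qed

lemma Rel2:
  assumes r: "1 \<le> x" "x < y" "y < z" "z \<le> n"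
  shows "d_act n x y (d_act n y z F) w = d_act n x z (d_act n x y F) w + d_act n y z (d_act n x z F) w"
proof -
  have r2: "1 \<le> y" "x < z" "y \<le> n" "1 \<le> z" "x \<le> n" using r by auto
  define txy where "txy = transpose x y"
  define txz where "txz = transpose x z"
  define tyz where "tyz = transpose y z"
  define \<sigma> where "\<sigma> = w \<circ> txy \<circ> tyz"
  have s1: "w \<circ> txz \<circ> txy = \<sigma>" and s2: "w \<circ> tyz \<circ> txz = \<sigma>"
    using r by (auto simp: fun_eq_iff \<sigma>_def txy_def txz_def tyz_def tr_apply)
  have L: "d_act n x y (d_act n y z F) w = (if w permutes {1..n} \<and> Up w x y then
      (if (w \<circ> txy) permutes {1..n} \<and> Up (w \<circ> txy) y z then F \<sigma> else 0) else 0)"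
    using r r2 by (simp add: d_act_eq \<sigma>_def txy_def tyz_def)
  have R1: "d_act n x z (d_act n x y F) w = (if w permutes {1..n} \<and> Up w x z then
      (if (w \<circ> txz) permutes {1..n} \<and> Up (w \<circ> txz) x y then F \<sigma> else 0) else 0)"
    using r r2 s1 by (simp add: d_act_eq txy_def txz_def)
  have R2: "d_act n y z (d_act n x z F) w = (if w permutes {1..n} \<and> Up w y z then
      (if (w \<circ> tyz) permutes {1..n} \<and> Up (w \<circ> tyz) x z then F \<sigma> else 0) else 0)"
    using r r2 s2 by (simp add: d_act_eq txz_def tyz_def)
  show ?thesis
  proof (cases "w permutes {1..n}")
    case False then show ?thesis unfolding L R1 R2 by simp
  next
    case True
    note v = True
    have ps1: "(w \<circ> tyz) permutes {1..n}" unfolding tyz_def by (rule perm_sw[OF v]) (use r r2 in auto)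
    have ps2: "(w \<circ> txy) permutes {1..n}" unfolding txy_def by (rule perm_sw[OF v]) (use r r2 in auto)
    have ps3: "(w \<circ> txz) permutes {1..n}" unfolding txz_def by (rule perm_sw[OF v]) (use r r2 in auto)
    note ps = ps1 ps2 ps3
    have inj: "inj w" using v by (rule permutes_inj)
    define \<alpha> where "\<alpha> = w x"
    define \<beta> where "\<beta> = w y"
    define \<gamma> where "\<gamma> = w z"
    have nv0: "w k \<noteq> w m" if "k \<noteq> m" for k m using inj that by (meson injD)
    have ne: "\<alpha> \<noteq> \<beta>" "\<alpha> \<noteq> \<gamma>" "\<beta> \<noteq> \<gamma>" unfolding \<alpha>_def \<beta>_def \<gamma>_def using r by (auto intro!: nv0)
    define M1 where "M1 = NB w \<alpha> \<beta> x y"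
    define M2 where "M2 = NB w \<alpha> \<gamma> y z"
    have eL: "Up w x y \<and> Up (w \<circ> txy) y z \<longleftrightarrow> \<alpha> < \<beta> \<and> \<alpha> < \<gamma> \<and> M1 \<and> M2"
    proof -
      have "Up (w \<circ> txy) y z \<longleftrightarrow> \<alpha> < \<gamma> \<and> NB (w \<circ> txy) \<alpha> \<gamma> y z"
        unfolding Up_NB using r by (simp add: txy_def tr_apply \<alpha>_def \<gamma>_def)
      also have "NB (w \<circ> txy) \<alpha> \<gamma> y z \<longleftrightarrow> M2"
        unfolding M2_def by (rule NB_cong) (use r in \<open>auto simp: txy_def tr_apply\<close>)
      finally have A: "Up (w \<circ> txy) y z \<longleftrightarrow> \<alpha> < \<gamma> \<and> M2" .
      have C: "Up w x y \<longleftrightarrow> \<alpha> < \<beta> \<and> M1" unfolding Up_NB M1_def \<alpha>_def \<beta>_def ..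
      show ?thesis unfolding A C by auto
    qed
    have eR1: "Up w x z \<and> Up (w \<circ> txz) x y \<longleftrightarrow> \<alpha> < \<gamma> \<and> \<gamma> < \<beta> \<and> M1 \<and> M2"
    proof -
      have A: "Up w x z \<longleftrightarrow> \<alpha> < \<gamma> \<and> NB w \<alpha> \<gamma> x y \<and> \<not> (\<alpha> < \<beta> \<and> \<beta> < \<gamma>) \<and> M2"
        unfolding Up_NB M2_def using NB_split[of x y z w \<alpha> \<gamma>] r by (auto simp: \<alpha>_def \<beta>_def \<gamma>_def)
      have "Up (w \<circ> txz) x y \<longleftrightarrow> \<gamma> < \<beta> \<and> NB (w \<circ> txz) \<gamma> \<beta> x y"
        unfolding Up_NB using r by (simp add: txz_def tr_apply \<beta>_def \<gamma>_def)
      also have "NB (w \<circ> txz) \<gamma> \<beta> x y \<longleftrightarrow> NB w \<gamma> \<beta> x y"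
        by (rule NB_cong) (use r in \<open>auto simp: txz_def tr_apply\<close>)
      finally have C: "Up (w \<circ> txz) x y \<longleftrightarrow> \<gamma> < \<beta> \<and> NB w \<gamma> \<beta> x y" .
      have B: "\<alpha> < \<gamma> \<Longrightarrow> \<gamma> < \<beta> \<Longrightarrow> NB w \<alpha> \<gamma> x y \<and> NB w \<gamma> \<beta> x y \<longleftrightarrow> M1"
        unfolding M1_def \<gamma>_def using r by (intro NB_merge) (auto intro!: nv0)
      show ?thesis unfolding A C using B by auto
    qed
    have eR2: "Up w y z \<and> Up (w \<circ> tyz) x z \<longleftrightarrow> \<alpha> < \<beta> \<and> \<beta> < \<gamma> \<and> M1 \<and> M2"
    proof -
      have A: "Up w y z \<longleftrightarrow> \<beta> < \<gamma> \<and> NB w \<beta> \<gamma> y z" unfolding Up_NB \<beta>_def \<gamma>_def ..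
      have "Up (w \<circ> tyz) x z \<longleftrightarrow> \<alpha> < \<beta> \<and> NB (w \<circ> tyz) \<alpha> \<beta> x z"
        unfolding Up_NB using r by (simp add: tyz_def tr_apply \<alpha>_def \<beta>_def)
      also have "NB (w \<circ> tyz) \<alpha> \<beta> x z \<longleftrightarrow> NB (w \<circ> tyz) \<alpha> \<beta> x y \<and> \<not> (\<alpha> < \<gamma> \<and> \<gamma> < \<beta>) \<and> NB (w \<circ> tyz) \<alpha> \<beta> y z"
        using NB_split[of x y z "w \<circ> tyz" \<alpha> \<beta>] r by (simp add: tyz_def \<gamma>_def)
      also have "NB (w \<circ> tyz) \<alpha> \<beta> x y \<longleftrightarrow> M1"
        unfolding M1_def by (rule NB_cong) (use r in \<open>auto simp: tyz_def tr_apply\<close>)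
      also have "NB (w \<circ> tyz) \<alpha> \<beta> y z \<longleftrightarrow> NB w \<alpha> \<beta> y z"
        by (rule NB_cong) (use r in \<open>auto simp: tyz_def tr_apply\<close>)
      finally have C: "Up (w \<circ> tyz) x z \<longleftrightarrow> \<alpha> < \<beta> \<and> M1 \<and> \<not> (\<alpha> < \<gamma> \<and> \<gamma> < \<beta>) \<and> NB w \<alpha> \<beta> y z" .
      have B: "\<alpha> < \<beta> \<Longrightarrow> \<beta> < \<gamma> \<Longrightarrow> NB w \<alpha> \<beta> y z \<and> NB w \<beta> \<gamma> y z \<longleftrightarrow> M2"
        unfolding M2_def \<beta>_def using r by (intro NB_merge) (auto intro!: nv0)
      show ?thesis unfolding A C using B by auto
    qed
    have X: "(Up w x y \<and> Up (w \<circ> txy) y z) \<longleftrightarrow> (Up w x z \<and> Up (w \<circ> txz) x y) \<or> (Up w y z \<and> Up (w \<circ> tyz) x z)"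
      unfolding eL eR1 eR2 using ne by auto
    have Y: "\<not> ((Up w x z \<and> Up (w \<circ> txz) x y) \<and> (Up w y z \<and> Up (w \<circ> tyz) x z))"
      unfolding eR1 eR2 by auto
    have L': "d_act n x y (d_act n y z F) w = (if Up w x y \<and> Up (w \<circ> txy) y z then F \<sigma> else 0)"
      unfolding L using v ps by simp
    have R1': "d_act n x z (d_act n x y F) w = (if Up w x z \<and> Up (w \<circ> txz) x y then F \<sigma> else 0)"
      unfolding R1 using v ps by simp
    have R2': "d_act n y z (d_act n x z F) w = (if Up w y z \<and> Up (w \<circ> tyz) x z then F \<sigma> else 0)"
      unfolding R2 using v ps by simp
    show ?thesis unfolding L' R1' R2' by (rule if_split3[OF X Y])
  qed
qed


lemma Up_cong:
  assumes "w' p = w p" "w' q = w q" "\<And>k. p < k \<Longrightarrow> k < q \<Longrightarrow> w' k = w k"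
  shows "Up w' p q \<longleftrightarrow> Up w p q"
  unfolding Up_NB assms(1,2) using NB_cong[OF assms(3)] by simp

lemma Up_cross:
  assumes r: "a < c" "c < b" "b < d" and inj: "inj w"
  shows "Up w c d \<and> Up (w \<circ> transpose c d) a b \<longleftrightarrow> Up w a b \<and> Up (w \<circ> transpose a b) c d"
proof -
  have nv0: "w k \<noteq> w m" if "k \<noteq> m" for k m using inj that by (meson injD)
  have ne: "w a \<noteq> w b" "w a \<noteq> w c" "w a \<noteq> w d" "w b \<noteq> w c" "w b \<noteq> w d" "w c \<noteq> w d"
    using r by (auto intro!: nv0)
  have A1: "Up (w \<circ> transpose c d) a b \<longleftrightarrow> w a < w b \<and> NB w (w a) (w b) a c \<and> \<not> (w a < w d \<and> w d < w b) \<and> NB w (w a) (w b) c b"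
  proof -
    have "Up (w \<circ> transpose c d) a b \<longleftrightarrow> w a < w b \<and> NB (w \<circ> transpose c d) (w a) (w b) a b"
      unfolding Up_NB using r by (simp add: tr_apply)
    also have "NB (w \<circ> transpose c d) (w a) (w b) a b \<longleftrightarrow> NB (w \<circ> transpose c d) (w a) (w b) a c \<and> \<not> (w a < w d \<and> w d < w b) \<and> NB (w \<circ> transpose c d) (w a) (w b) c b"
      using NB_split[of a c b "w \<circ> transpose c d" "w a" "w b"] r by simp
    also have "NB (w \<circ> transpose c d) (w a) (w b) a c \<longleftrightarrow> NB w (w a) (w b) a c"
      by (rule NB_cong) (use r in \<open>auto simp: tr_apply\<close>)
    also have "NB (w \<circ> transpose c d) (w a) (w b) c b \<longleftrightarrow> NB w (w a) (w b) c b"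
      by (rule NB_cong) (use r in \<open>auto simp: tr_apply\<close>)
    finally show ?thesis .
  qed
  have A2: "Up w a b \<longleftrightarrow> w a < w b \<and> NB w (w a) (w b) a c \<and> \<not> (w a < w c \<and> w c < w b) \<and> NB w (w a) (w b) c b"
    unfolding Up_NB using NB_split[of a c b w "w a" "w b"] r by simp
  have A3: "Up w c d \<longleftrightarrow> w c < w d \<and> NB w (w c) (w d) c b \<and> \<not> (w c < w b \<and> w b < w d) \<and> NB w (w c) (w d) b d"
    unfolding Up_NB using NB_split[of c b d w "w c" "w d"] r by simp
  have A4: "Up (w \<circ> transpose a b) c d \<longleftrightarrow> w c < w d \<and> NB w (w c) (w d) c b \<and> \<not> (w c < w a \<and> w a < w d) \<and> NB w (w c) (w d) b d"
  proof -
    have "Up (w \<circ> transpose a b) c d \<longleftrightarrow> w c < w d \<and> NB (w \<circ> transpose a b) (w c) (w d) c d"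
      unfolding Up_NB using r by (simp add: tr_apply)
    also have "NB (w \<circ> transpose a b) (w c) (w d) c d \<longleftrightarrow> NB (w \<circ> transpose a b) (w c) (w d) c b \<and> \<not> (w c < w a \<and> w a < w d) \<and> NB (w \<circ> transpose a b) (w c) (w d) b d"
      using NB_split[of c b d "w \<circ> transpose a b" "w c" "w d"] r by simp
    also have "NB (w \<circ> transpose a b) (w c) (w d) c b \<longleftrightarrow> NB w (w c) (w d) c b"
      by (rule NB_cong) (use r in \<open>auto simp: tr_apply\<close>)
    also have "NB (w \<circ> transpose a b) (w c) (w d) b d \<longleftrightarrow> NB w (w c) (w d) b d"
      by (rule NB_cong) (use r in \<open>auto simp: tr_apply\<close>)
    finally show ?thesis .
  qed
  have key: "w a < w b \<Longrightarrow> w c < w d \<Longrightarrow>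
     (\<not> (w c < w b \<and> w b < w d) \<and> \<not> (w a < w d \<and> w d < w b)) \<longleftrightarrow>
     (\<not> (w a < w c \<and> w c < w b) \<and> \<not> (w c < w a \<and> w a < w d))"
    using ne by linarith
  show ?thesis unfolding A1 A2 A3 A4 using key by blast
qed

lemma tr_comm:
  assumes "x \<noteq> z" "x \<noteq> u" "y \<noteq> z" "y \<noteq> u"
  shows "w \<circ> transpose z u \<circ> transpose x y = w \<circ> transpose x y \<circ> transpose z u"
  using assms by (auto simp: fun_eq_iff tr_apply)

lemma D_comm_disj:
  assumes r: "1 \<le> x" "x < y" "y \<le> n" "1 \<le> z" "z < u" "u \<le> n"
    and d: "x \<noteq> z" "x \<noteq> u" "y \<noteq> z" "y \<noteq> u"
  shows "d_act n z u (d_act n x y F) w = d_act n x y (d_act n z u F) w"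
proof -
  define t1 where "t1 = transpose x y"
  define t2 where "t2 = transpose z u"
  have ce: "w \<circ> t2 \<circ> t1 = w \<circ> t1 \<circ> t2" unfolding t1_def t2_def by (rule tr_comm[OF d])
  have L: "d_act n z u (d_act n x y F) w = (if w permutes {1..n} \<and> Up w z u then
      (if (w \<circ> t2) permutes {1..n} \<and> Up (w \<circ> t2) x y then F (w \<circ> t1 \<circ> t2) else 0) else 0)"
    using r ce by (simp add: d_act_eq t1_def t2_def)
  have R: "d_act n x y (d_act n z u F) w = (if w permutes {1..n} \<and> Up w x y then
      (if (w \<circ> t1) permutes {1..n} \<and> Up (w \<circ> t1) z u then F (w \<circ> t1 \<circ> t2) else 0) else 0)"
    using r by (simp add: d_act_eq t1_def t2_def)
  show ?thesis
  proof (cases "w permutes {1..n}")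
    case False then show ?thesis unfolding L R by simp
  next
    case True
    note v = True
    have ps1: "(w \<circ> t1) permutes {1..n}" unfolding t1_def by (rule perm_sw[OF v]) (use r in auto)
    have ps2: "(w \<circ> t2) permutes {1..n}" unfolding t2_def by (rule perm_sw[OF v]) (use r in auto)
    have inj: "inj w" using v by (rule permutes_inj)
    have key: "Up w z u \<and> Up (w \<circ> t2) x y \<longleftrightarrow> Up w x y \<and> Up (w \<circ> t1) z u"
    proof -
      consider (s1) "y < z" | (s2) "u < x" | (n1) "x < z" "u < y" | (n2) "z < x" "y < u"
        | (c1) "x < z" "z < y" "y < u" | (c2) "z < x" "x < u" "u < y"
        using r d by linarith
      then show ?thesis
      proof cases
        case s1
        have "Up (w \<circ> t2) x y \<longleftrightarrow> Up w x y"
          by (rule Up_cong) (use r d s1 in \<open>auto simp: t2_def tr_apply\<close>)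
        moreover have "Up (w \<circ> t1) z u \<longleftrightarrow> Up w z u"
          by (rule Up_cong) (use r d s1 in \<open>auto simp: t1_def tr_apply\<close>)
        ultimately show ?thesis by blast
      next
        case s2
        have "Up (w \<circ> t2) x y \<longleftrightarrow> Up w x y"
          by (rule Up_cong) (use r d s2 in \<open>auto simp: t2_def tr_apply\<close>)
        moreover have "Up (w \<circ> t1) z u \<longleftrightarrow> Up w z u"
          by (rule Up_cong) (use r d s2 in \<open>auto simp: t1_def tr_apply\<close>)
        ultimately show ?thesis by blast
      next
        case n1
        have e: "(w \<circ> t2) x = w x" "(w \<circ> t2) y = w y" using d by (simp_all add: t2_def tr_apply)
        have nb: "NB (w \<circ> t2) (w x) (w y) x y \<longleftrightarrow> NB w (w x) (w y) x y"
          by (rule NB_perm) (use n1 r in \<open>auto simp: t2_def tr_apply\<close>)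
        have "Up (w \<circ> t2) x y \<longleftrightarrow> Up w x y" unfolding Up_NB e nb ..
        moreover have "Up (w \<circ> t1) z u \<longleftrightarrow> Up w z u"
          by (rule Up_cong) (use r d n1 in \<open>auto simp: t1_def tr_apply\<close>)
        ultimately show ?thesis by blast
      next
        case n2
        have e: "(w \<circ> t1) z = w z" "(w \<circ> t1) u = w u" using d by (simp_all add: t1_def tr_apply)
        have nb: "NB (w \<circ> t1) (w z) (w u) z u \<longleftrightarrow> NB w (w z) (w u) z u"
          by (rule NB_perm) (use n2 r in \<open>auto simp: t1_def tr_apply\<close>)
        have "Up (w \<circ> t1) z u \<longleftrightarrow> Up w z u" unfolding Up_NB e nb ..
        moreover have "Up (w \<circ> t2) x y \<longleftrightarrow> Up w x y"
          by (rule Up_cong) (use r d n2 in \<open>auto simp: t2_def tr_apply\<close>)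
        ultimately show ?thesis by blast
      next
        case c1
        show ?thesis unfolding t1_def t2_def using Up_cross[OF c1 inj] by blast
      next
        case c2
        show ?thesis unfolding t1_def t2_def using Up_cross[OF c2 inj] by blast
      qed
    qed
    show ?thesis unfolding L R using v ps1 ps2 key by auto
  qed
qed



definition Eop :: "nat \<Rightarrow> nat \<Rightarrow> nat \<Rightarrow> 'a::comm_ring_1 op" where
  "Eop n a k = (if a < k then d_act n a k else op_neg (d_act n k a))"

lemma d_neg: "d_act n p q (op_neg A F) w = - d_act n p q (A F) w"
  by (simp add: d_act_def op_neg_def)

lemma E_lt: "a < k \<Longrightarrow> Eop n a k = d_act n a k" by (simp add: Eop_def)
lemma E_gt: "k < a \<Longrightarrow> Eop n a k = op_neg (d_act n k a)" by (simp add: Eop_def)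

lemma E_sum: "Eop n b l (\<lambda>v. \<Sum>k\<in>A. g k v) w = (\<Sum>k\<in>A. Eop n b l (g k) w)"
  by (simp add: Eop_def d_act_sum sum_negf)

lemma theta_E:
  assumes "1 \<le> a" "a \<le> n"
  shows "theta_op n a F w = (\<Sum>k\<in>{1..n}-{a}. Eop n a k F w)"
proof -
  have U: "{1..n}-{a} = {1..<a} \<union> {a<..n}" using assms by auto
  have "(\<Sum>k\<in>{1..n}-{a}. Eop n a k F w) = (\<Sum>k\<in>{1..<a}. Eop n a k F w) + (\<Sum>k\<in>{a<..n}. Eop n a k F w)"
    unfolding U by (rule sum.union_disjoint) auto
  also have "(\<Sum>k\<in>{1..<a}. Eop n a k F w) = - (\<Sum>j\<in>{1..<a}. d_act n j a F w)"
    by (simp add: E_gt sum_negf)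
  also have "(\<Sum>k\<in>{a<..n}. Eop n a k F w) = (\<Sum>j\<in>{a<..n}. d_act n a j F w)"
    by (simp add: E_lt)
  finally show ?thesis by (simp add: theta_apply)
qed

lemma theta_E_fun:
  assumes "1 \<le> a" "a \<le> n"
  shows "theta_op n a F = (\<lambda>w. \<Sum>k\<in>{1..n}-{a}. Eop n a k F w)"
  by (rule ext) (rule theta_E[OF assms])

lemma E_comm:
  assumes r: "a \<in> {1..n}" "k \<in> {1..n}" "b \<in> {1..n}" "l \<in> {1..n}"
    and d: "a \<noteq> k" "b \<noteq> l" "a \<noteq> b" "a \<noteq> l" "k \<noteq> b" "k \<noteq> l"
  shows "Eop n b l (Eop n a k F) w = Eop n a k (Eop n b l F) w"
proof -
  have C: "d_act n z u (d_act n x y F) w = d_act n x y (d_act n z u F) w"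
    if "x \<in> {a,k}" "y \<in> {a,k}" "z \<in> {b,l}" "u \<in> {b,l}" "x < y" "z < u" for x y z u
    by (rule D_comm_disj) (use that r d in auto)
  show ?thesis
  proof (cases "a < k")
    case True
    show ?thesis
    proof (cases "b < l")
      case True2: True
      show ?thesis using C[of a k b l] True True2 by (simp add: E_lt)
    next
      case False
      then have "l < b" using d by simp
      then show ?thesis using C[of a k l b] True by (simp add: E_lt E_gt d_neg)
    qed
  next
    case False
    then have ka: "k < a" using d by simp
    show ?thesis
    proof (cases "b < l")
      case True2: True
      show ?thesis using C[of k a b l] ka True2 by (simp add: E_lt E_gt d_neg)
    next
      case False
      then have "l < b" using d by simp
      then show ?thesis using C[of k a l b] ka by (simp add: E_lt E_gt d_neg)
    qed
  qed
qed

lemma E_zero: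
  assumes "a \<noteq> b"
  shows "Eop n b a (Eop n a b F) w = 0" "Eop n a b (Eop n b a F) w = 0"
proof -
  have A: "Eop n y x (Eop n x y F) w = 0" "Eop n x y (Eop n y x F) w = 0" if "x < y" for x y
  proof -
    have e1: "Eop n x y = d_act n x y" "Eop n y x = op_neg (d_act n x y)" using that by (simp_all add: E_lt E_gt)
    show "Eop n y x (Eop n x y F) w = 0" unfolding e1 by (simp add: d_act_twice)
    show "Eop n x y (Eop n y x F) w = 0" unfolding e1 d_neg by (simp add: d_act_twice)
  qed
  show "Eop n b a (Eop n a b F) w = 0" using A(1)[of a b] A(2)[of b a] assms by (cases "a < b") auto
  show "Eop n a b (Eop n b a F) w = 0" using A(2)[of a b] A(1)[of b a] assms by (cases "a < b") auto
qed

lemma triple_sorted: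
  assumes r: "1 \<le> x" "x < y" "y < z" "z \<le> n"
  shows "d_act n y z (d_act n x y F) w = d_act n x y (d_act n x z F) w + d_act n x z (d_act n y z F) w"
        "d_act n x y (d_act n y z F) w = d_act n x z (d_act n x y F) w + d_act n y z (d_act n x z F) w"
  using Rel1[OF r] Rel2[OF r] by auto

lemma triple:
  assumes r: "a \<in> {1..n}" "b \<in> {1..n}" "c \<in> {1..n}" and d: "a \<noteq> b" "a \<noteq> c" "b \<noteq> c"
  shows "(Eop n b c (Eop n a b F) w - Eop n a b (Eop n b c F) w)
       + (Eop n b a (Eop n a c F) w - Eop n a c (Eop n b a F) w)
       + (Eop n b c (Eop n a c F) w - Eop n a c (Eop n b c F) w) = (0::'a::comm_ring_1)"
proof -
  consider "a < b" "b < c" | "a < c" "c < b" | "b < a" "a < c" | "b < c" "c < a" | "c < a" "a < b" | "c < b" "b < a"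
    using d by linarith
  then show ?thesis
  proof cases
    case 1
    note t = triple_sorted[of a b c n F w]
    show ?thesis using 1 r t by (simp add: E_lt E_gt d_neg algebra_simps)
  next
    case 2
    note t = triple_sorted[of a c b n F w]
    show ?thesis using 2 r t by (simp add: E_lt E_gt d_neg algebra_simps)
  next
    case 3
    note t = triple_sorted[of b a c n F w]
    show ?thesis using 3 r t by (simp add: E_lt E_gt d_neg algebra_simps)
  next
    case 4
    note t = triple_sorted[of b c a n F w]
    show ?thesis using 4 r t by (simp add: E_lt E_gt d_neg algebra_simps)
  next
    case 5
    note t = triple_sorted[of c a b n F w]
    show ?thesis using 5 r t by (simp add: E_lt E_gt d_neg algebra_simps)
  next
    case 6
    note t = triple_sorted[of c b a n F w]
    show ?thesis using 6 r t by (simp add: E_lt E_gt d_neg algebra_simps)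
  qed
qed


lemma theta_comm:
  fixes F :: "'a::comm_ring_1 grp_elt"
  assumes ab: "a \<in> {1..n}" "b \<in> {1..n}"
  shows "theta_op n a (theta_op n b F) = theta_op n b (theta_op n a F)"
proof (cases "a = b")
  case True then show ?thesis by simp
next
  case False
  show ?thesis
  proof (rule ext)
    fix w
    define Ka where "Ka = {1..n} - {a}"
    define Kb where "Kb = {1..n} - {b}"
    define K where "K = {1..n} - {a,b}"
    define Z where "Z k l = Eop n b l (Eop n a k F) w - Eop n a k (Eop n b l F) w" for k l
    have ra: "1 \<le> a" "a \<le> n" and rb: "1 \<le> b" "b \<le> n" using ab by auto
    have fin: "finite Ka" "finite Kb" "finite K" by (simp_all add: Ka_def Kb_def K_def)
    have LHS: "theta_op n b (theta_op n a F) w = (\<Sum>k\<in>Ka. \<Sum>l\<in>Kb. Eop n b l (Eop n a k F) w)"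
    proof -
      have "theta_op n b (theta_op n a F) w = (\<Sum>l\<in>Kb. Eop n b l (theta_op n a F) w)"
        unfolding Kb_def by (rule theta_E[OF rb])
      also have "\<dots> = (\<Sum>l\<in>Kb. \<Sum>k\<in>Ka. Eop n b l (Eop n a k F) w)"
        unfolding theta_E_fun[OF ra] Ka_def[symmetric] by (simp add: E_sum)
      also have "\<dots> = (\<Sum>k\<in>Ka. \<Sum>l\<in>Kb. Eop n b l (Eop n a k F) w)"
        by (rule sum.swap)
      finally show ?thesis .
    qed
    have RHS: "theta_op n a (theta_op n b F) w = (\<Sum>k\<in>Ka. \<Sum>l\<in>Kb. Eop n a k (Eop n b l F) w)"
    proof -
      have "theta_op n a (theta_op n b F) w = (\<Sum>k\<in>Ka. Eop n a k (theta_op n b F) w)"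
        unfolding Ka_def by (rule theta_E[OF ra])
      also have "\<dots> = (\<Sum>k\<in>Ka. \<Sum>l\<in>Kb. Eop n a k (Eop n b l F) w)"
        unfolding theta_E_fun[OF rb] Kb_def[symmetric] by (simp add: E_sum)
      finally show ?thesis .
    qed
    have bKa: "b \<in> Ka" and aKb: "a \<in> Kb" using False ab by (auto simp: Ka_def Kb_def)
    have K1: "Ka - {b} = K" and K2: "Kb - {a} = K" by (auto simp: Ka_def Kb_def K_def)
    have Zba: "Z b a = 0" unfolding Z_def by (simp add: E_zero[OF False])
    have row_b: "(\<Sum>l\<in>Kb. Z b l) = (\<Sum>c\<in>K. Z b c)"
      using sum.remove[OF fin(2) aKb, of "Z b"] Zba K2 by simp
    have row_k: "(\<Sum>l\<in>Kb. Z k l) = Z k a + Z k k" if k: "k \<in> K" for k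
    proof -
      have "(\<Sum>l\<in>Kb. Z k l) = Z k a + (\<Sum>l\<in>K. Z k l)"
        using sum.remove[OF fin(2) aKb, of "Z k"] K2 by simp
      also have "(\<Sum>l\<in>K. Z k l) = Z k k + (\<Sum>l\<in>K - {k}. Z k l)"
        using sum.remove[OF fin(3) k, of "Z k"] by simp
      also have "(\<Sum>l\<in>K - {k}. Z k l) = 0"
      proof (rule sum.neutral, intro ballI)
        fix l assume l: "l \<in> K - {k}"
        have "Eop n b l (Eop n a k F) w = Eop n a k (Eop n b l F) w"
          by (rule E_comm) (use l k ab False in \<open>auto simp: K_def\<close>)
        then show "Z k l = 0" by (simp add: Z_def)
      qed
      finally show ?thesis by simp
    qed
    have "(\<Sum>k\<in>Ka. \<Sum>l\<in>Kb. Z k l) = (\<Sum>l\<in>Kb. Z b l) + (\<Sum>k\<in>K. \<Sum>l\<in>Kb. Z k l)"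
      using sum.remove[OF fin(1) bKa, of "\<lambda>k. \<Sum>l\<in>Kb. Z k l"] K1 by simp
    also have "\<dots> = (\<Sum>c\<in>K. Z b c) + (\<Sum>c\<in>K. Z c a + Z c c)"
      using row_b row_k by simp
    also have "\<dots> = (\<Sum>c\<in>K. Z b c + Z c a + Z c c)"
      by (simp add: sum.distrib add.assoc)
    also have "\<dots> = 0"
    proof (rule sum.neutral, intro ballI)
      fix c assume c: "c \<in> K"
      show "Z b c + Z c a + Z c c = 0"
        unfolding Z_def by (rule triple) (use c ab False in \<open>auto simp: K_def\<close>)
    qed
    finally have "(\<Sum>k\<in>Ka. \<Sum>l\<in>Kb. Z k l) = 0" .
    then have "(\<Sum>k\<in>Ka. \<Sum>l\<in>Kb. Eop n b l (Eop n a k F) w) = (\<Sum>k\<in>Ka. \<Sum>l\<in>Kb. Eop n a k (Eop n b l F) w)"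
      by (simp add: Z_def sum_subtractf)
    then show "theta_op n a (theta_op n b F) w = theta_op n b (theta_op n a F) w"
      unfolding LHS RHS by simp
  qed
qed




lemma theta_lin: "theta_op n j (\<lambda>v. s * F v - G v) w = s * theta_op n j F w - theta_op n j G w"
proof -
  have d: "d_act n a b (\<lambda>v. s * F v - G v) w = s * d_act n a b F w - d_act n a b G w" for a b
    by (simp add: d_act_def)
  show ?thesis
    by (simp add: theta_apply d sum_subtractf sum_distrib_left algebra_simps)
qed

lemma fT_comm:
  assumes "j \<in> {1..n}" "l \<in> {1..n}"
  shows "fT n a j (fT n b l F) = fT n b l (fT n a j F)"
proof (rule ext)
  fix w
  have e: "fT n a j F = (\<lambda>v. a * F v - theta_op n j F v)" for a j F by (simp add: fun_eq_iff fT_apply)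
  show "fT n a j (fT n b l F) w = fT n b l (fT n a j F) w"
    unfolding e theta_lin using fun_cong[OF theta_comm[OF assms, of F], of w]
    by (simp add: algebra_simps)
qed

lemma act_prod_fold: "act_prod F As = fold (\<lambda>A G. A G) As F"
  by (simp add: act_prod_def foldl_conv_fold)

lemma rows:
  fixes F :: "'a::comm_ring_1 grp_elt"
  assumes "1 \<le> i" "good n i F"
  shows "act_prod F (concat (map (\<lambda>i. map (fT n (x i)) [i+1..<n+1]) [i..<n])) = act_prod F (concat (map (R_factors n x) [i..<n]))"
proof -
  have "\<And>i (F :: 'a grp_elt). n - i = m \<Longrightarrow> 1 \<le> i \<Longrightarrow> good n i F \<Longrightarrow>
      act_prod F (concat (map (\<lambda>i. map (fT n (x i)) [i+1..<n+1]) [i..<n])) = act_prod F (concat (map (R_factors n x) [i..<n]))" for m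
  proof (induction m)
    case 0 then show ?case by simp
  next
    case (Suc m)
    then have i: "i < n" by simp
    have up: "[i..<n] = i # [Suc i..<n]" using i by (simp add: upt_conv_Cons)
    have R: "R_factors n x i = map (fB n (x i) i) [i+1..<n+1]"
      by (simp add: R_factors_def fB_def)
    have rc: "act_prod F (map (fT n (x i)) [i+1..<n+1]) = act_prod F (map (fB n (x i) i) [i+1..<n+1])"
      using row_claim[OF Suc.prems(2) i Suc.prems(3)] .
    have g: "good n (Suc i) (act_prod F (map (fB n (x i) i) [i+1..<n+1]))"
      by (rule good_row[OF good_mono[OF Suc.prems(3)]]) auto
    have "n - Suc i = m" using Suc.prems by simp
    note ih = Suc.IH[OF this _ g]
    show ?case unfolding up using rc ih R by (simp add: act_prod_append)
  qed
  then show ?thesis using assms by blast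
qed

lemma distinct_concat_pairs:
  assumes "distinct xs" "\<And>i. distinct (f i)"
  shows "distinct (concat (map (\<lambda>i. map (\<lambda>j. (i, j)) (f i)) xs))"
  using assms
proof (induction xs)
  case Nil then show ?case by simp
next
  case (Cons x xs)
  have "set (map (\<lambda>j. (x, j)) (f x)) \<inter> set (concat (map (\<lambda>i. map (\<lambda>j. (i, j)) (f i)) xs)) = {}"
    using Cons.prems(1) by auto
  then show ?case using Cons by (simp add: distinct_map inj_on_def)
qed

lemma w0_inv: "w0 n (w0 n k) = k"
  unfolding w0_def by (cases "1 \<le> k \<and> k \<le> n") auto

lemma w0_perm: "w0 n permutes {1..n}"
  unfolding permutes_def
proof (intro conjI allI impI)
  fix x assume "x \<notin> {1..n}" then show "w0 n x = x" by (auto simp: w0_def)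
next
  fix y show "\<exists>!x. w0 n x = y"
    by (metis w0_inv)
qed

lemma good_w0: "good n 1 (basis_elt (w0 n) :: 'a::comm_ring_1 grp_elt)"
  unfolding good_def basis_elt_def using w0_perm by (auto simp: w0_def)

theorem proposition4p25:
  fixes n :: nat and ps :: "(nat \<times> nat) list"
  assumes "n \<ge> 1"
    and "distinct ps"
    and "set ps = {(i, j). 1 \<le> i \<and> i < j \<and> j \<le> n}"
  shows "S_BPD n Xvar = act_prod (basis_elt (w0 n)) (map (dunkl_factor n Xvar) ps)"
proof -
  define ps0 where "ps0 = concat (map (\<lambda>i. map (\<lambda>j. (i,j)) [i+1..<n+1]) [1..<n])"
  have dk: "dunkl_factor n x p = fT n (x (fst p)) (snd p)" for x :: "nat \<Rightarrow> qpoly" and p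
    by (simp add: dunkl_factor_def fT_def)
  have set0: "set ps0 = {(i, j). 1 \<le> i \<and> i < j \<and> j \<le> n}"
  proof
    show "set ps0 \<subseteq> {(i, j). 1 \<le> i \<and> i < j \<and> j \<le> n}" unfolding ps0_def by auto
  next
    show "{(i, j). 1 \<le> i \<and> i < j \<and> j \<le> n} \<subseteq> set ps0"
    proof (clarify)
      fix a b :: nat assume ab: "1 \<le> a" "a < b" "b \<le> n"
      have "a \<in> set [1..<n]" "b \<in> set [a+1..<n+1]" using ab by auto
      then show "(a, b) \<in> set ps0" unfolding ps0_def by auto
    qed
  qed
  have dist0: "distinct ps0"
    unfolding ps0_def by (rule distinct_concat_pairs) simp_all
  have ms: "mset ps = mset ps0"
    using set_eq_iff_mset_eq_distinct[OF assms(2) dist0] assms(3) set0 by simp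
  have fe: "fold (\<lambda>A G. A G) (map (dunkl_factor n Xvar) ps) = fold (\<lambda>A G. A G) (map (dunkl_factor n Xvar) ps0)"
  proof (rule fold_multiset_equiv)
    fix A B assume A: "A \<in> set (map (dunkl_factor n Xvar) ps)" and B: "B \<in> set (map (dunkl_factor n Xvar) ps)"
    from A obtain p where p: "p \<in> set ps" "A = dunkl_factor n Xvar p" unfolding set_map by (rule imageE)
    from B obtain q where q: "q \<in> set ps" "B = dunkl_factor n Xvar q" unfolding set_map by (rule imageE)
    have rng: "snd x \<in> {1..n}" if "x \<in> set ps" for x
    proof -
      have "x \<in> {(i, j). 1 \<le> i \<and> i < j \<and> j \<le> n}" using that assms(3) by simp
      then show ?thesis by (cases x) simp
    qed
    show "(\<lambda>G. A G) \<circ> (\<lambda>G. B G) = (\<lambda>G. B G) \<circ> (\<lambda>G. A G)"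
      unfolding p(2) q(2) dk comp_def by (rule ext) (rule fT_comm[OF rng[OF p(1)] rng[OF q(1)]])
  next
    show "mset (map (dunkl_factor n Xvar) ps) = mset (map (dunkl_factor n Xvar) ps0)"
      using ms by simp
  qed
  have "act_prod (basis_elt (w0 n)) (map (dunkl_factor n Xvar) ps) = act_prod (basis_elt (w0 n)) (map (dunkl_factor n Xvar) ps0)"
    unfolding act_prod_fold using fe by simp
  also have "map (dunkl_factor n Xvar) ps0 = concat (map (\<lambda>i. map (fT n (Xvar i)) [i+1..<n+1]) [1..<n])"
    unfolding ps0_def by (simp add: dk map_concat comp_def)
  also have "act_prod (basis_elt (w0 n)) \<dots> = act_prod (basis_elt (w0 n)) (concat (map (R_factors n Xvar) [1..<n]))"
    by (rule rows[OF _ good_w0]) simp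
  finally show ?thesis unfolding S_BPD_def by simp
qed


end
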